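(* Let $d\ge1$, $n\ge1$, $t>0$, $x\in\mathbb{R}^d$, and let $\psi^{*(n)}$ be defined as in the context for the kernel $f$. (i) Suppose $f$ is the Riesz kernel of order $\alpha\in(0,d)$ or the Bessel kernel of order $\alpha\in(0,d)$, and let $D_{\alpha,d}>0$ be a constant such that $J_f(u,v,y,z)\le D_{\alpha,d}(u+v)^{-(d-\alpha)/2}$ for all $u,v>0$, $y,z\in\mathbb{R}^d$. Then for all $\mathbf{s},\mathbf{t}\in(0,t)^n$ with pairwise distinct coordinates, $$\psi^{*(n)}(\mathbf{s},\mathbf{t})\le\Big(D_{\alpha,d}2^{-(d-\alpha)/2}\Big)^n\,[\beta(\mathbf{s})\beta(\mathbf{t})]^{-(d-\alpha)/4},$$ where $\beta(\mathbf{s})=\prod_{j=1}^n(s_{\sigma(j+1)}-s_{\sigma(j)})$ and $\beta(\mathbf{t})=\prod_{j=1}^n(t_{\rho(j+1)}-t_{\rho(j)})$. (ii) Suppose $f$ is the heat kernel of order $\alpha>0$ or the Poisson kernel of order $\alpha>0$. Then there is a constant $C_{\alpha,d}$ depending on $\alpha,d$ such that $\psi^{*(n)}(\mathbf{s},\mathbf{t})\le C_{\alpha,d}^n$ for all such $\mathbf{s},\mathbf{t}$.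
   Context: $p_t(x)=(2\pi t)^{-d/2}e^{-|x|^2/(2t)}$ is the heat kernel; $J_f(u,v,y,z)=\int\int p_u(x-y)p_v(x'-z)f(x-x')dx\,dx'$. Kernels: Riesz of order $\alpha\in(0,d)$: $f(x)=\gamma_{\alpha,d}|x|^{-d+\alpha}$, $\gamma_{\alpha,d}=\Gamma((d-\alpha)/2)2^{-\alpha}\pi^{-d/2}/\Gamma(\alpha/2)$; Bessel of order $\alpha>0$: $f(x)=\gamma'_\alpha\int_0^\infty w^{(\alpha-d)/2-1}e^{-w}e^{-|x|^2/(4w)}dw$, $\gamma'_\alpha=(4\pi)^{\alpha/2}\Gamma(\alpha/2)$; heat of order $\alpha$: $f(x)=(2\pi\alpha)^{-d/2}e^{-|x|^2/(2\alpha)}$; Poisson of order $\alpha$: $f(x)=C_d\alpha(|x|^2+\alpha^2)^{-(d+1)/2}$, $C_d=\pi^{-(d+1)/2}\Gamma((d+1)/2)$. For $\mathbf{s}=(s_1,\dots,s_n),\mathbf{t}=(t_1,\dots,t_n)\in(0,t)^n$ with pairwise distinct coordinates, let $\rho,\sigma$ be the permutations of $\{1,\dots,n\}$ with $t_{\rho(1)}<\dots<t_{\rho(n)}$ and $s_{\sigma(1)}<\dots<s_{\sigma(n)}$; set $t_{\rho(n+1)}=s_{\sigma(n+1)}=t$ and $x_{\rho(n+1)}=y_{\sigma(n+1)}=x$, and $$\psi^{*(n)}(\mathbf{s},\mathbf{t})=\int_{\mathbb{R}^{2nd}}\prod_{j=1}^nf(x_j-y_j)\prod_{j=1}^np_{t_{\rho(j+1)}-t_{\rho(j)}}(x_{\rho(j+1)}-x_{\rho(j)})\prod_{j=1}^np_{s_{\sigma(j+1)}-s_{\sigma(j)}}(y_{\sigma(j+1)}-y_{\sigma(j)})\,d\mathbf{x}\,d\mathbf{y},$$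 with $\mathbf{x}=(x_1,\dots,x_n),\mathbf{y}=(y_1,\dots,y_n)\in(\mathbb{R}^d)^n$. *)

theory Defs
  imports "HOL-Analysis.Analysis"
begin

text \<open>The space R^d is modelled by a Euclidean space type 'a with d = DIM('a).
Vectors (x_1..x_n), (s_1..s_n) are functions on nat, used on indices 0..n-1 (0-based).\<close>

definition heat :: "real \<Rightarrow> 'a::euclidean_space \<Rightarrow> real" where
  "heat t x = (2 * pi * t) powr (- (real DIM('a) / 2)) * exp (- (norm x)\<^sup>2 / (2 * t))"

definition Jf :: "('a::euclidean_space \<Rightarrow> real) \<Rightarrow> real \<Rightarrow> real \<Rightarrow> 'a \<Rightarrow> 'a \<Rightarrow> ennreal" where
  "Jf f u v y z = (\<integral>\<^sup>+ x. \<integral>\<^sup>+ x'. ennreal (heat u (x - y) * heat v (x' - z) * f (x - x')) \<partial>lborel \<partial>lborel)"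

definition riesz :: "real \<Rightarrow> 'a::euclidean_space \<Rightarrow> real" where
  "riesz \<alpha> x = (let d = real DIM('a) in
     Gamma ((d - \<alpha>) / 2) * 2 powr (- \<alpha>) * pi powr (- d / 2) / Gamma (\<alpha> / 2)
     * norm x powr (- d + \<alpha>))"

definition bessel :: "real \<Rightarrow> 'a::euclidean_space \<Rightarrow> real" where
  "bessel \<alpha> x = (let d = real DIM('a) in
     (4 * pi) powr (\<alpha> / 2) * Gamma (\<alpha> / 2) *
     set_lebesgue_integral lborel {0<..}
       (\<lambda>w. w powr ((\<alpha> - d) / 2 - 1) * exp (- w) * exp (- (norm x)\<^sup>2 / (4 * w))))"

definition heatk :: "real \<Rightarrow> 'a::euclidean_space \<Rightarrow> real" where
  "heatk \<alpha> x = (2 * pi * \<alpha>) powr (- (real DIM('a) / 2)) * exp (- (norm x)\<^sup>2 / (2 * \<alpha>))"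

definition poisson :: "real \<Rightarrow> 'a::euclidean_space \<Rightarrow> real" where
  "poisson \<alpha> x = (let d = real DIM('a) in
     pi powr (- (d + 1) / 2) * Gamma ((d + 1) / 2) * \<alpha> * ((norm x)\<^sup>2 + \<alpha>\<^sup>2) powr (- (d + 1) / 2))"

definition sort_perm :: "nat \<Rightarrow> (nat \<Rightarrow> real) \<Rightarrow> nat \<Rightarrow> nat" where
  "sort_perm n t = (THE \<rho>. bij_betw \<rho> {..<n} {..<n}
      \<and> (\<forall>i j. i < j \<and> j < n \<longrightarrow> t (\<rho> i) < t (\<rho> j))
      \<and> (\<forall>i. n \<le> i \<longrightarrow> \<rho> i = i))"

definition sorted_ext :: "nat \<Rightarrow> real \<Rightarrow> (nat \<Rightarrow> real) \<Rightarrow> nat \<Rightarrow> real" where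
  "sorted_ext n T t j = (if j < n then t (sort_perm n t j) else T)"

definition reord_ext :: "nat \<Rightarrow> (nat \<Rightarrow> real) \<Rightarrow> 'b \<Rightarrow> (nat \<Rightarrow> 'b) \<Rightarrow> nat \<Rightarrow> 'b" where
  "reord_ext n t x xs j = (if j < n then xs (sort_perm n t j) else x)"

definition psi :: "('a::euclidean_space \<Rightarrow> real) \<Rightarrow> nat \<Rightarrow> real \<Rightarrow> 'a \<Rightarrow>
    (nat \<Rightarrow> real) \<Rightarrow> (nat \<Rightarrow> real) \<Rightarrow> ennreal" where
  "psi f n T x s t =
    (\<integral>\<^sup>+ xs. \<integral>\<^sup>+ ys. ennreal (
        (\<Prod>j<n. f (xs j - ys j))
      * (\<Prod>j<n. heat (sorted_ext n T t (Suc j) - sorted_ext n T t j)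
                      (reord_ext n t x xs (Suc j) - reord_ext n t x xs j))
      * (\<Prod>j<n. heat (sorted_ext n T s (Suc j) - sorted_ext n T s j)
                      (reord_ext n s x ys (Suc j) - reord_ext n s x ys j)))
     \<partial>(PiM {..<n} (\<lambda>_. (lborel :: 'a measure)))
     \<partial>(PiM {..<n} (\<lambda>_. (lborel :: 'a measure))))"

definition beta :: "nat \<Rightarrow> real \<Rightarrow> (nat \<Rightarrow> real) \<Rightarrow> real" where
  "beta n T s = (\<Prod>j<n. sorted_ext n T s (Suc j) - sorted_ext n T s j)"

definition admissible :: "nat \<Rightarrow> real \<Rightarrow> (nat \<Rightarrow> real) \<Rightarrow> bool" where
  "admissible n T s \<longleftrightarrow> (\<forall>i<n. 0 < s i \<and> s i < T) \<and> inj_on s {..<n}"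

end

theory Submission
  imports Defs "HOL-Probability.Probability"
begin


lemma gauss1:
  fixes b m :: real assumes b: "b > 0"
  shows "(\<integral>\<^sup>+t. ennreal (exp (- b * (t - m)\<^sup>2)) \<partial>lborel) = ennreal (sqrt (pi / b))"
proof -
  define \<sigma> where "\<sigma> = sqrt (1 / (2 * b))"
  have s: "\<sigma> > 0" "\<sigma>\<^sup>2 = 1 / (2*b)" using b by (auto simp: \<sigma>_def)
  have nd: "normal_density m \<sigma> t = sqrt (b / pi) * exp (- b * (t - m)\<^sup>2)" for t
    using b s unfolding normal_density_def
    by (simp add: s(2) field_simps real_sqrt_divide)
  have "(\<integral>\<^sup>+t. ennreal (normal_density m \<sigma> t) \<partial>lborel) = 1"
    by (subst nn_integral_eq_integral) (auto simp: s)
  hence "(\<integral>\<^sup>+t. ennreal (sqrt (b / pi)) * ennreal (exp (- b * (t - m)\<^sup>2)) \<partial>lborel) = 1"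
    using b by (simp add: nd ennreal_mult)
  hence "ennreal (sqrt (b / pi)) * (\<integral>\<^sup>+t. ennreal (exp (- b * (t - m)\<^sup>2)) \<partial>lborel) = 1"
    by (subst (asm) nn_integral_cmult) auto
  hence "ennreal (sqrt (pi / b)) * (ennreal (sqrt (b / pi)) * (\<integral>\<^sup>+t. ennreal (exp (- b * (t - m)\<^sup>2)) \<partial>lborel)) = ennreal (sqrt (pi / b))"
    by simp
  moreover have "ennreal (sqrt (pi / b)) * ennreal (sqrt (b / pi)) = 1"
    using b by (simp add: ennreal_mult'[symmetric] real_sqrt_mult[symmetric])
  ultimately show ?thesis by (simp add: mult.assoc[symmetric])
qed

lemma norm_sq_basis:
  fixes z :: "'a::euclidean_space"
  shows "(norm z)\<^sup>2 = (\<Sum>e\<in>Basis. (z \<bullet> e)\<^sup>2)"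
  unfolding power2_norm_eq_inner by (subst euclidean_inner) (simp add: power2_eq_square)

lemma gaussd:
  fixes m :: "'a::euclidean_space" and b :: real assumes b: "b > 0"
  shows "(\<integral>\<^sup>+z. ennreal (exp (- b * (norm (z - m))\<^sup>2)) \<partial>(lborel::'a measure))
       = ennreal ((pi / b) powr (real DIM('a) / 2))"
proof -
  have eq: "ennreal (exp (- b * (norm (z - m))\<^sup>2)) = (\<Prod>e\<in>Basis. ennreal (exp (- b * (z \<bullet> e - m \<bullet> e)\<^sup>2)))" for z
  proof -
    have "(norm (z - m))\<^sup>2 = (\<Sum>e\<in>Basis. (z \<bullet> e - m \<bullet> e)\<^sup>2)"
      unfolding norm_sq_basis[of "z - m"] inner_diff_left ..
    hence "- b * (norm (z - m))\<^sup>2 = (\<Sum>e\<in>Basis. - b * (z \<bullet> e - m \<bullet> e)\<^sup>2)"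
      by (simp only: sum_distrib_left)
    hence "exp (- b * (norm (z - m))\<^sup>2) = exp (\<Sum>e\<in>Basis. - b * (z \<bullet> e - m \<bullet> e)\<^sup>2)"
      by (rule arg_cong)
    also have "\<dots> = (\<Prod>e\<in>Basis. exp (- b * (z \<bullet> e - m \<bullet> e)\<^sup>2))"
      by (rule exp_sum) simp
    finally show ?thesis by (simp add: prod_ennreal)
  qed
  have "(\<integral>\<^sup>+z. ennreal (exp (- b * (norm (z - m))\<^sup>2)) \<partial>(lborel::'a measure))
      = (\<Prod>e\<in>(Basis::'a set). (\<integral>\<^sup>+t. ennreal (exp (- b * (t - m \<bullet> e)\<^sup>2)) \<partial>lborel))"
    unfolding eq by (rule nn_integral_lborel_prod) auto
  also have "\<dots> = (\<Prod>e\<in>(Basis::'a set). ennreal (sqrt (pi / b)))"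
    by (intro prod.cong refl gauss1[OF b])
  also have "\<dots> = ennreal (sqrt (pi / b) ^ DIM('a))"
    using b by (simp add: ennreal_power[symmetric])
  also have "sqrt (pi / b) ^ DIM('a) = (pi / b) powr (real DIM('a) / 2)"
    using b by (simp add: powr_half_sqrt[symmetric] powr_realpow[symmetric] powr_powr)
  finally show ?thesis .
qed

lemma heat_sym: "heat u (a - b) = heat u (b - a)"
  unfolding heat_def by (simp add: norm_minus_commute)

lemma heat_nonneg: "u > 0 \<Longrightarrow> 0 \<le> heat u x"
  unfolding heat_def by simp

lemma heat_int:
  fixes y :: "'a::euclidean_space" assumes u: "u > 0"
  shows "(\<integral>\<^sup>+x. ennreal (heat u (x - y)) \<partial>lborel) = 1"
proof -
  have "(\<integral>\<^sup>+x. ennreal (heat u (x - y)) \<partial>lborel)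
     = (\<integral>\<^sup>+x. ennreal ((2 * pi * u) powr (- (real DIM('a) / 2))) * ennreal (exp (- (1 / (2 * u)) * (norm (x - y))\<^sup>2)) \<partial>lborel)"
    unfolding heat_def using u by (intro nn_integral_cong) (simp add: ennreal_mult[symmetric])
  also have "\<dots> = ennreal ((2 * pi * u) powr (- (real DIM('a) / 2))) * ennreal ((pi / (1 / (2 * u))) powr (real DIM('a) / 2))"
    using u by (subst nn_integral_cmult, simp, subst gaussd, auto)
  also have "\<dots> = 1"
    using u by (simp add: ennreal_mult[symmetric] powr_minus field_simps)
  finally show ?thesis .
qed

lemma norm_sq_split:
  fixes x y z :: "'a::real_inner"
  shows "(norm (x - z))\<^sup>2 + (norm (y - z))\<^sup>2 = 2 * (norm (z - (1/2) *\<^sub>R (x + y)))\<^sup>2 + (norm (x - y))\<^sup>2 / 2"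
  by (simp add: power2_norm_eq_inner inner_simps inner_commute algebra_simps) (simp add: field_simps)

lemma gauss_conv:
  fixes x y :: "'a::euclidean_space" assumes a: "a > 0"
  shows "(\<integral>\<^sup>+z. ennreal (exp (- a * (norm (x - z))\<^sup>2) * exp (- a * (norm (y - z))\<^sup>2)) \<partial>lborel)
       = ennreal ((pi / (2 * a)) powr (real DIM('a) / 2) * exp (- (a / 2) * (norm (x - y))\<^sup>2))"
proof -
  have "exp (- a * (norm (x - z))\<^sup>2) * exp (- a * (norm (y - z))\<^sup>2)
      = exp (- (a / 2) * (norm (x - y))\<^sup>2) * exp (- (2 * a) * (norm (z - (1/2) *\<^sub>R (x + y)))\<^sup>2)" for z
  proof -
    have "exp (- a * (norm (x - z))\<^sup>2) * exp (- a * (norm (y - z))\<^sup>2)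
        = exp (- a * ((norm (x - z))\<^sup>2 + (norm (y - z))\<^sup>2))"
      by (simp add: exp_add[symmetric] algebra_simps)
    also have "\<dots> = exp (- (a / 2) * (norm (x - y))\<^sup>2 + - (2 * a) * (norm (z - (1/2) *\<^sub>R (x + y)))\<^sup>2)"
      unfolding norm_sq_split by (simp add: algebra_simps)
    finally show ?thesis by (simp only: exp_add)
  qed
  hence "(\<integral>\<^sup>+z. ennreal (exp (- a * (norm (x - z))\<^sup>2) * exp (- a * (norm (y - z))\<^sup>2)) \<partial>lborel)
     = (\<integral>\<^sup>+z. ennreal (exp (- (a / 2) * (norm (x - y))\<^sup>2)) * ennreal (exp (- (2 * a) * (norm (z - (1/2) *\<^sub>R (x + y)))\<^sup>2)) \<partial>lborel)"
    by (intro nn_integral_cong) (simp add: ennreal_mult[symmetric])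
  also have "\<dots> = ennreal (exp (- (a / 2) * (norm (x - y))\<^sup>2)) * ennreal ((pi / (2 * a)) powr (real DIM('a) / 2))"
    using a by (subst nn_integral_cmult, simp, subst gaussd, auto)
  also have "\<dots> = ennreal ((pi / (2 * a)) powr (real DIM('a) / 2) * exp (- (a / 2) * (norm (x - y))\<^sup>2))"
    by (simp add: ennreal_mult[symmetric] mult.commute)
  finally show ?thesis .
qed



lemma heat_nonneg': "0 \<le> heat u x"
  unfolding heat_def by simp

lemma heat_meas[measurable]: "heat u \<in> borel_measurable borel"
  unfolding heat_def[abs_def] by measurable

lemma meas_comp_any:
  assumes "space M = UNIV"
  shows "(\<lambda>\<omega>. \<omega> k) \<in> measurable (PiM I (\<lambda>_. M)) M"
proof (cases "k \<in> I")
  case True then show ?thesis by measurable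
next
  case False
  have "(\<lambda>\<omega>::_ \<Rightarrow> 'a. (undefined::'a)) \<in> measurable (PiM I (\<lambda>_. M)) M"
    using assms by (intro measurable_const) auto
  moreover have "\<omega> k = undefined" if "\<omega> \<in> space (PiM I (\<lambda>_. M))" for \<omega>
    using that False by (auto simp: space_PiM PiE_def extensional_def)
  ultimately show ?thesis
    by (subst measurable_cong[where g="\<lambda>_. undefined"]) auto
qed

lemma meas_comp_lborel[measurable]:
  "(\<lambda>\<omega>. \<omega> k) \<in> borel_measurable (PiM I (\<lambda>_. (lborel::'a::euclidean_space measure)))"
  using meas_comp_any[of "lborel::'a measure" k I] by simp

lemma meas_reord[measurable]:
  "(\<lambda>\<omega>. reord_ext n t (x::'a::euclidean_space) \<omega> j) \<in> borel_measurable (PiM I (\<lambda>_. (lborel::'a measure)))"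
  unfolding reord_ext_def by (cases "j < n") simp_all

definition Hch :: "nat \<Rightarrow> real \<Rightarrow> (nat \<Rightarrow> real) \<Rightarrow> 'a::euclidean_space \<Rightarrow> (nat \<Rightarrow> 'a) \<Rightarrow> real" where
  "Hch n T t x xs = (\<Prod>j<n. heat (sorted_ext n T t (Suc j) - sorted_ext n T t j)
                      (reord_ext n t x xs (Suc j) - reord_ext n t x xs j))"

lemma Hch_nonneg: "0 \<le> Hch n T t x xs"
  unfolding Hch_def by (intro prod_nonneg) (simp add: heat_nonneg')

lemma meas_Hch[measurable]:
  "(\<lambda>\<omega>. Hch n T t (x::'a::euclidean_space) \<omega>) \<in> borel_measurable (PiM I (\<lambda>_. (lborel::'a measure)))"
  unfolding Hch_def by measurable



definition psiG :: "('a::euclidean_space \<Rightarrow> 'a \<Rightarrow> ennreal) \<Rightarrow> nat \<Rightarrow> real \<Rightarrow> 'a \<Rightarrow>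
    (nat \<Rightarrow> real) \<Rightarrow> (nat \<Rightarrow> real) \<Rightarrow> ennreal" where
  "psiG G n T x s t =
    (\<integral>\<^sup>+ xs. \<integral>\<^sup>+ ys. (\<Prod>j<n. G (xs j) (ys j)) * ennreal (Hch n T t x xs) * ennreal (Hch n T s x ys)
     \<partial>(PiM {..<n} (\<lambda>_. (lborel :: 'a measure)))
     \<partial>(PiM {..<n} (\<lambda>_. (lborel :: 'a measure))))"

lemma psi_le_psiG:
  assumes f0: "\<And>w. 0 \<le> f w" and fG: "\<And>w z. ennreal (f (w - z)) \<le> G w z"
  shows "psi f n T x s t \<le> psiG G n T x s t"
  unfolding psi_def psiG_def Hch_def[symmetric]
proof (intro nn_integral_mono)
  fix xs ys :: "nat \<Rightarrow> 'a"
  have "ennreal ((\<Prod>j<n. f (xs j - ys j)) * Hch n T t x xs * Hch n T s x ys)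
      = (\<Prod>j<n. ennreal (f (xs j - ys j))) * ennreal (Hch n T t x xs) * ennreal (Hch n T s x ys)"
    by (simp add: ennreal_mult'' Hch_nonneg prod_ennreal f0)
  also have "\<dots> \<le> (\<Prod>j<n. G (xs j) (ys j)) * ennreal (Hch n T t x xs) * ennreal (Hch n T s x ys)"
    by (intro mult_right_mono prod_mono_ennreal) (auto simp: fG)
  finally show "ennreal ((\<Prod>j<n. f (xs j - ys j)) * Hch n T t x xs * Hch n T s x ys)
      \<le> (\<Prod>j<n. G (xs j) (ys j)) * ennreal (Hch n T t x xs) * ennreal (Hch n T s x ys)" .
qed

definition Amix :: "('b \<Rightarrow> 'a::euclidean_space \<Rightarrow> ennreal) \<Rightarrow> nat \<Rightarrow> real \<Rightarrow> 'a \<Rightarrow> (nat \<Rightarrow> real) \<Rightarrow> (nat \<Rightarrow> 'b) \<Rightarrow> ennreal" where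
  "Amix K n T x t \<Theta> = (\<integral>\<^sup>+xs. (\<Prod>j<n. K (\<Theta> j) (xs j)) * ennreal (Hch n T t x xs) \<partial>(PiM {..<n} (\<lambda>_. (lborel :: 'a measure))))"

locale mixture =
  fixes M :: "'b measure" and K :: "'b \<Rightarrow> 'a::euclidean_space \<Rightarrow> ennreal" and G :: "'a \<Rightarrow> 'a \<Rightarrow> ennreal"
  assumes sf: "sigma_finite_measure M" and sp: "space M = UNIV"
    and Kmeas[measurable]: "(\<lambda>(\<theta>, x). K \<theta> x) \<in> borel_measurable (M \<Otimes>\<^sub>M lborel)"
    and Gdef: "\<And>x y. G x y = (\<integral>\<^sup>+\<theta>. K \<theta> x * K \<theta> y \<partial>M)"
begin

lemma compM[measurable]: "(\<lambda>\<omega>. \<omega> k) \<in> measurable (PiM I (\<lambda>_. M)) M"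
  by (rule meas_comp_any[OF sp])

lemma psf: "product_sigma_finite (\<lambda>_. M)"
  using sf by (simp add: product_sigma_finite_def)

lemma sfPM: "sigma_finite_measure (PiM {..<n::nat} (\<lambda>_. M))"
  using product_sigma_finite.sigma_finite[OF psf, of "{..<n}"] by simp

lemma prod_G:
  "(\<Prod>j<(n::nat). G (xs j) (ys j)) = (\<integral>\<^sup>+\<Theta>. (\<Prod>j<n. K (\<Theta> j) (xs j)) * (\<Prod>j<n. K (\<Theta> j) (ys j)) \<partial>PiM {..<n} (\<lambda>_. M))"
proof -
  have "(\<integral>\<^sup>+\<Theta>. (\<Prod>j<n. K (\<Theta> j) (xs j)) * (\<Prod>j<n. K (\<Theta> j) (ys j)) \<partial>PiM {..<n} (\<lambda>_. M))
      = (\<integral>\<^sup>+\<Theta>. (\<Prod>j<n. K (\<Theta> j) (xs j) * K (\<Theta> j) (ys j)) \<partial>PiM {..<n} (\<lambda>_. M))"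
    by (simp add: prod.distrib)
  also have "\<dots> = (\<Prod>j<n. \<integral>\<^sup>+\<theta>. K \<theta> (xs j) * K \<theta> (ys j) \<partial>M)"
    by (rule product_sigma_finite.product_nn_integral_prod[OF psf, of "{..<n}" "\<lambda>j \<theta>. K \<theta> (xs j) * K \<theta> (ys j)", simplified]) measurable
  finally show ?thesis by (simp add: Gdef)
qed


lemma psiG_eq:
  fixes n :: nat
  defines "P \<equiv> PiM {..<n} (\<lambda>_. (lborel :: 'a measure))" and "PM \<equiv> PiM {..<n} (\<lambda>_. M)"
  shows "psiG G n T x s t = (\<integral>\<^sup>+\<Theta>. Amix K n T x t \<Theta> * Amix K n T x s \<Theta> \<partial>PM)"
proof -
  interpret PM: sigma_finite_measure PM unfolding PM_def by (rule sfPM)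
  interpret P: sigma_finite_measure P unfolding P_def
    using product_sigma_finite.sigma_finite[of "\<lambda>_. lborel" "{..<n}"]
    by (simp add: product_sigma_finite_def sigma_finite_lborel)
  interpret PPM: pair_sigma_finite P PM ..
  define PK where "PK \<Theta> xs = (\<Prod>j<n. K (\<Theta> j) (xs j))" for \<Theta> xs
  define Ht where "Ht xs = ennreal (Hch n T t x xs)" for xs
  define Hs where "Hs xs = ennreal (Hch n T s x xs)" for xs
  have [measurable]: "(\<lambda>(\<Theta>, xs). PK \<Theta> xs) \<in> borel_measurable (PM \<Otimes>\<^sub>M P)"
    unfolding PK_def PM_def P_def by measurable
  have [measurable]: "(\<lambda>(xs, \<Theta>). PK \<Theta> xs) \<in> borel_measurable (P \<Otimes>\<^sub>M PM)"
    unfolding PK_def PM_def P_def by measurable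
  have [measurable]: "Ht \<in> borel_measurable P" "Hs \<in> borel_measurable P"
    unfolding Ht_def Hs_def P_def by measurable
  have "psiG G n T x s t = (\<integral>\<^sup>+xs. \<integral>\<^sup>+ys. (\<integral>\<^sup>+\<Theta>. (PK \<Theta> xs * Ht xs) * (PK \<Theta> ys * Hs ys) \<partial>PM) \<partial>P \<partial>P)"
    unfolding psiG_def P_def[symmetric]
  proof (intro nn_integral_cong)
    fix xs ys
    have "(\<Prod>j<n. G (xs j) (ys j)) * ennreal (Hch n T t x xs) * ennreal (Hch n T s x ys)
       = (\<integral>\<^sup>+\<Theta>. PK \<Theta> xs * PK \<Theta> ys \<partial>PM) * (Ht xs * Hs ys)"
      unfolding prod_G PK_def PM_def Ht_def Hs_def by (simp add: mult.assoc)
    also have "\<dots> = (\<integral>\<^sup>+\<Theta>. PK \<Theta> xs * PK \<Theta> ys * (Ht xs * Hs ys) \<partial>PM)"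
      by (rule nn_integral_multc[symmetric]) (unfold PK_def PM_def, measurable)
    also have "\<dots> = (\<integral>\<^sup>+\<Theta>. (PK \<Theta> xs * Ht xs) * (PK \<Theta> ys * Hs ys) \<partial>PM)"
      by (simp add: ac_simps)
    finally show "(\<Prod>j<n. G (xs j) (ys j)) * ennreal (Hch n T t x xs) * ennreal (Hch n T s x ys)
       = (\<integral>\<^sup>+\<Theta>. (PK \<Theta> xs * Ht xs) * (PK \<Theta> ys * Hs ys) \<partial>PM)" .
  qed
  also have "\<dots> = (\<integral>\<^sup>+xs. \<integral>\<^sup>+\<Theta>. (\<integral>\<^sup>+ys. (PK \<Theta> xs * Ht xs) * (PK \<Theta> ys * Hs ys) \<partial>P) \<partial>PM \<partial>P)"
    by (intro nn_integral_cong PPM.Fubini'[symmetric]) measurable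
  also have "\<dots> = (\<integral>\<^sup>+xs. \<integral>\<^sup>+\<Theta>. (PK \<Theta> xs * Ht xs) * Amix K n T x s \<Theta> \<partial>PM \<partial>P)"
    unfolding Amix_def PK_def[symmetric] Hs_def[symmetric] P_def[symmetric]
    by (intro nn_integral_cong nn_integral_cmult) measurable
  also have "\<dots> = (\<integral>\<^sup>+\<Theta>. \<integral>\<^sup>+xs. (PK \<Theta> xs * Ht xs) * Amix K n T x s \<Theta> \<partial>P \<partial>PM)"
  proof -
    have [measurable]: "(\<lambda>\<Theta>. Amix K n T x s \<Theta>) \<in> borel_measurable PM"
      unfolding Amix_def PK_def[symmetric] Hs_def[symmetric] P_def[symmetric] by measurable
    show ?thesis by (rule PPM.Fubini'[symmetric]) measurable
  qed
  also have "\<dots> = (\<integral>\<^sup>+\<Theta>. Amix K n T x t \<Theta> * Amix K n T x s \<Theta> \<partial>PM)"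
    unfolding Amix_def PK_def[symmetric] Ht_def[symmetric] P_def[symmetric]
    by (intro nn_integral_cong nn_integral_multc) measurable
  finally show ?thesis .
qed


lemma Amix_meas[measurable]:
  fixes n :: nat
  shows "(\<lambda>\<Theta>. Amix K n T x s \<Theta>) \<in> borel_measurable (PiM {..<n} (\<lambda>_. M))"
proof -
  interpret P: sigma_finite_measure "PiM {..<n} (\<lambda>_. (lborel :: 'a measure))"
    using product_sigma_finite.sigma_finite[of "\<lambda>_. lborel" "{..<n}"]
    by (simp add: product_sigma_finite_def sigma_finite_lborel)
  show ?thesis unfolding Amix_def by measurable
qed

lemma psiG_CS:
  "(psiG G n T x s t)\<^sup>2 \<le> psiG G n T x s s * psiG G n T x t t"
proof -
  have "(psiG G n T x s t)\<^sup>2 \<le> (\<integral>\<^sup>+\<Theta>. (Amix K n T x t \<Theta>)^2 \<partial>PiM {..<n} (\<lambda>_. M)) * (\<integral>\<^sup>+\<Theta>. (Amix K n T x s \<Theta>)^2 \<partial>PiM {..<n} (\<lambda>_. M))"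
    unfolding psiG_eq by (rule Cauchy_Schwarz_nn_integral) measurable
  also have "\<dots> = psiG G n T x t t * psiG G n T x s s"
    unfolding psiG_eq by (simp add: power2_eq_square)
  finally show ?thesis by (simp add: mult.commute)
qed

end



lemma distr_PiM_perm:
  fixes M :: "'b measure"
  assumes sf: "sigma_finite_measure M" and I: "finite I" and \<sigma>: "bij_betw \<sigma> I I"
  shows "distr (PiM I (\<lambda>_. M)) (PiM I (\<lambda>_. M)) (\<lambda>\<omega>. \<lambda>i\<in>I. \<omega> (\<sigma> i)) = PiM I (\<lambda>_. M)"
proof -
  interpret product_sigma_finite "\<lambda>_. M" using sf by (simp add: product_sigma_finite_def)
  have \<sigma>I: "\<sigma> i \<in> I" if "i \<in> I" for i using \<sigma> that by (auto simp: bij_betw_def)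
  have gm: "(\<lambda>\<omega>. \<lambda>i\<in>I. \<omega> (\<sigma> i)) \<in> measurable (PiM I (\<lambda>_. M)) (PiM I (\<lambda>_. M))"
    by (rule measurable_restrict) (use \<sigma>I in auto)
  define \<tau> where "\<tau> = the_inv_into I \<sigma>"
  have \<tau>: "bij_betw \<tau> I I" unfolding \<tau>_def by (rule bij_betw_the_inv_into[OF \<sigma>])
  have \<sigma>\<tau>: "\<sigma> (\<tau> j) = j" if "j \<in> I" for j
    using \<sigma> that unfolding \<tau>_def by (simp add: bij_betw_def f_the_inv_into_f)
  have \<tau>\<sigma>: "\<tau> (\<sigma> j) = j" if "j \<in> I" for j
    using \<sigma> that unfolding \<tau>_def by (simp add: bij_betw_def the_inv_into_f_f)
  have \<tau>I: "\<tau> i \<in> I" if "i \<in> I" for i using \<tau> that by (auto simp: bij_betw_def)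
  show ?thesis
  proof (rule PiM_eqI)
    show "finite I" by fact
    show "sets (distr (PiM I (\<lambda>_. M)) (PiM I (\<lambda>_. M)) (\<lambda>\<omega>. \<lambda>i\<in>I. \<omega> (\<sigma> i))) = sets (PiM I (\<lambda>_. M))"
      by simp
    fix A assume A: "\<And>i. i \<in> I \<Longrightarrow> A i \<in> sets M"
    have pre: "(\<lambda>\<omega>. \<lambda>i\<in>I. \<omega> (\<sigma> i)) -` Pi\<^sub>E I A \<inter> space (PiM I (\<lambda>_. M)) = Pi\<^sub>E I (\<lambda>j. A (\<tau> j))"
    proof (intro set_eqI iffI)
      fix \<omega> assume "\<omega> \<in> (\<lambda>\<omega>. \<lambda>i\<in>I. \<omega> (\<sigma> i)) -` Pi\<^sub>E I A \<inter> space (PiM I (\<lambda>_. M))"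
      then have h: "\<And>i. i \<in> I \<Longrightarrow> \<omega> (\<sigma> i) \<in> A i" and e: "\<omega> \<in> extensional I"
        by (auto simp: space_PiM PiE_def Pi_def)
      show "\<omega> \<in> Pi\<^sub>E I (\<lambda>j. A (\<tau> j))"
        using h[OF \<tau>I] e by (auto simp: PiE_def Pi_def \<sigma>\<tau>)
    next
      fix \<omega> assume w: "\<omega> \<in> Pi\<^sub>E I (\<lambda>j. A (\<tau> j))"
      then have "\<omega> \<in> space (PiM I (\<lambda>_. M))"
        using A[THEN sets.sets_into_space] \<tau>I by (auto simp: space_PiM PiE_def Pi_def)
      moreover have "\<omega> (\<sigma> i) \<in> A i" if "i \<in> I" for i
      proof -
        have "\<omega> (\<sigma> i) \<in> A (\<tau> (\<sigma> i))" using w \<sigma>I[OF that] by (auto simp: PiE_iff)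
        thus ?thesis using \<tau>\<sigma>[OF that] by simp
      qed
      hence "(\<lambda>i\<in>I. \<omega> (\<sigma> i)) \<in> Pi\<^sub>E I A" by auto
      ultimately show "\<omega> \<in> (\<lambda>\<omega>. \<lambda>i\<in>I. \<omega> (\<sigma> i)) -` Pi\<^sub>E I A \<inter> space (PiM I (\<lambda>_. M))" by simp
    qed
    have "emeasure (distr (PiM I (\<lambda>_. M)) (PiM I (\<lambda>_. M)) (\<lambda>\<omega>. \<lambda>i\<in>I. \<omega> (\<sigma> i))) (Pi\<^sub>E I A)
        = emeasure (PiM I (\<lambda>_. M)) (Pi\<^sub>E I (\<lambda>j. A (\<tau> j)))"
      using A by (subst emeasure_distr[OF gm]) (auto simp: pre intro!: sets_PiM_I_finite I)
    also have "\<dots> = (\<Prod>j\<in>I. emeasure M (A (\<tau> j)))"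
      using A \<tau>I by (subst emeasure_PiM) (auto simp: I)
    also have "\<dots> = (\<Prod>i\<in>I. emeasure M (A i))"
      using prod.reindex_bij_betw[OF \<tau>, of "\<lambda>i. emeasure M (A i)"] by simp
    finally show "emeasure (distr (PiM I (\<lambda>_. M)) (PiM I (\<lambda>_. M)) (\<lambda>\<omega>. \<lambda>i\<in>I. \<omega> (\<sigma> i))) (Pi\<^sub>E I A)
        = (\<Prod>i\<in>I. emeasure M (A i))" .
  qed
qed

lemma nn_integral_PiM_perm:
  fixes M :: "'b measure"
  assumes sf: "sigma_finite_measure M" and I: "finite I" and \<sigma>: "bij_betw \<sigma> I I"
    and f: "f \<in> borel_measurable (PiM I (\<lambda>_. M))"
  shows "(\<integral>\<^sup>+\<omega>. f \<omega> \<partial>PiM I (\<lambda>_. M)) = (\<integral>\<^sup>+\<omega>. f (\<lambda>i\<in>I. \<omega> (\<sigma> i)) \<partial>PiM I (\<lambda>_. M))"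
proof -
  have \<sigma>I: "\<sigma> i \<in> I" if "i \<in> I" for i using \<sigma> that by (auto simp: bij_betw_def)
  have gm: "(\<lambda>\<omega>. \<lambda>i\<in>I. \<omega> (\<sigma> i)) \<in> measurable (PiM I (\<lambda>_. M)) (PiM I (\<lambda>_. M))"
    by (rule measurable_restrict) (use \<sigma>I in auto)
  have "(\<integral>\<^sup>+\<omega>. f \<omega> \<partial>PiM I (\<lambda>_. M)) = (\<integral>\<^sup>+\<omega>. f \<omega> \<partial>distr (PiM I (\<lambda>_. M)) (PiM I (\<lambda>_. M)) (\<lambda>\<omega>. \<lambda>i\<in>I. \<omega> (\<sigma> i)))"
    by (simp add: distr_PiM_perm[OF assms(1-3)])
  also have "\<dots> = (\<integral>\<^sup>+\<omega>. f (\<lambda>i\<in>I. \<omega> (\<sigma> i)) \<partial>PiM I (\<lambda>_. M))"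
    by (rule nn_integral_distr[OF gm]) (use f in simp)
  finally show ?thesis .
qed



definition extp :: "nat \<Rightarrow> 'a \<Rightarrow> (nat \<Rightarrow> 'a) \<Rightarrow> nat \<Rightarrow> 'a" where
  "extp n x a j = (if j < n then a j else x)"

lemma meas_extp[measurable]:
  "(\<lambda>\<omega>. extp n (x::'a::euclidean_space) \<omega> j) \<in> borel_measurable (PiM I (\<lambda>_. (lborel::'a measure)))"
  unfolding extp_def by (cases "j < n") simp_all

definition JG :: "('a::euclidean_space \<Rightarrow> 'a \<Rightarrow> ennreal) \<Rightarrow> real \<Rightarrow> 'a \<Rightarrow> 'a \<Rightarrow> ennreal" where
  "JG G u a b = (\<integral>\<^sup>+w. \<integral>\<^sup>+w'. ennreal (heat u (w - a) * heat u (w' - b)) * G w w' \<partial>lborel \<partial>lborel)"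

definition chainK :: "('a::euclidean_space \<Rightarrow> 'a \<Rightarrow> ennreal) \<Rightarrow> nat \<Rightarrow> (nat \<Rightarrow> real) \<Rightarrow> 'a \<Rightarrow> nat \<Rightarrow> ennreal" where
  "chainK G n u x k = (\<integral>\<^sup>+a. \<integral>\<^sup>+b. (\<Prod>j\<in>{k..<n}. G (a j) (b j))
      * ennreal (\<Prod>j\<in>{k..<n}. heat (u j) (extp n x a (Suc j) - extp n x a j))
      * ennreal (\<Prod>j\<in>{k..<n}. heat (u j) (extp n x b (Suc j) - extp n x b j))
      \<partial>PiM {k..<n} (\<lambda>_. (lborel::'a measure)) \<partial>PiM {k..<n} (\<lambda>_. (lborel::'a measure)))"

lemma psf_lborel: "product_sigma_finite (\<lambda>_. (lborel::'a::euclidean_space measure))"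
  by (simp add: product_sigma_finite_def sigma_finite_lborel)

lemma sf_PiM_lborel: "finite I \<Longrightarrow> sigma_finite_measure (PiM I (\<lambda>_. (lborel::'a::euclidean_space measure)))"
  using product_sigma_finite.sigma_finite[OF psf_lborel] by blast

lemma chainK_base: "chainK G n u x n = 1"
  unfolding chainK_def by (simp add: PiM_empty nn_integral_count_space_finite)

lemma chainK_step:
  fixes G :: "'a::euclidean_space \<Rightarrow> 'a \<Rightarrow> ennreal"
  assumes Gm[measurable]: "(\<lambda>(w, w'). G w w') \<in> borel_measurable (lborel \<Otimes>\<^sub>M lborel)"
    and JB: "\<And>a b. JG G (u k) a b \<le> c"
    and kn: "k < n"
  shows "chainK G n u x k \<le> c * chainK G n u x (Suc k)"
proof -
  define J where "J = {Suc k..<n}"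
  have IJ: "{k..<n} = insert k J" and kJ: "k \<notin> J" and fJ: "finite J"
    using kn by (auto simp: J_def)
  let ?L = "lborel :: 'a measure"
  define PJ where "PJ = PiM J (\<lambda>_. ?L)"
  define PI where "PI = PiM (insert k J) (\<lambda>_. ?L)"
  interpret psf: product_sigma_finite "\<lambda>_. ?L" by (rule psf_lborel)
  interpret PJ: sigma_finite_measure PJ unfolding PJ_def by (rule sf_PiM_lborel[OF fJ])
  interpret PI: sigma_finite_measure PI unfolding PI_def using fJ by (intro sf_PiM_lborel) simp
  interpret LPJ: pair_sigma_finite ?L PJ ..
  define e where "e a = extp n x a (Suc k)" for a :: "nat \<Rightarrow> 'a"
  define HJ where "HJ a = (\<Prod>j\<in>J. heat (u j) (extp n x a (Suc j) - extp n x a j))" for a :: "nat \<Rightarrow> 'a"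
  define HI where "HI a = (\<Prod>j\<in>insert k J. heat (u j) (extp n x a (Suc j) - extp n x a j))" for a :: "nat \<Rightarrow> 'a"
  define F where "F a b = (\<Prod>j\<in>insert k J. G (a j) (b j)) * ennreal (HI a) * ennreal (HI b)" for a b
  define R where "R a b = (\<Prod>j\<in>J. G (a j) (b j)) * ennreal (HJ a) * ennreal (HJ b)" for a b
  define Q where "Q \<alpha> \<beta> c d = G \<alpha> \<beta> * ennreal (heat (u k) (c - \<alpha>)) * ennreal (heat (u k) (d - \<beta>))" for \<alpha> \<beta> c d
  have key: "F (a(k := \<alpha>)) (b(k := \<beta>)) = Q \<alpha> \<beta> (e a) (e b) * R a b" for a b \<alpha> \<beta>
  proof -
    have ex: "extp n x (a(k := \<alpha>)) j = extp n x a j" if "j \<noteq> k" for a :: "nat \<Rightarrow> 'a" and \<alpha> j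
      using that by (simp add: extp_def)
    have exk: "extp n x (a(k := \<alpha>)) k = \<alpha>" for a :: "nat \<Rightarrow> 'a" and \<alpha>
      using kn by (simp add: extp_def)
    have HI: "HI (a(k := \<alpha>)) = heat (u k) (e a - \<alpha>) * HJ a" for a :: "nat \<Rightarrow> 'a" and \<alpha>
    proof -
      have "(\<Prod>j\<in>J. heat (u j) (extp n x (a(k := \<alpha>)) (Suc j) - extp n x (a(k := \<alpha>)) j)) = HJ a"
        unfolding HJ_def by (rule prod.cong) (auto simp: ex J_def)
      thus ?thesis unfolding HI_def e_def using fJ kJ by (simp add: ex exk)
    qed
    have PG: "(\<Prod>j\<in>insert k J. G ((a(k := \<alpha>)) j) ((b(k := \<beta>)) j)) = G \<alpha> \<beta> * (\<Prod>j\<in>J. G (a j) (b j))"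
    proof -
      have "(\<Prod>j\<in>J. G ((a(k := \<alpha>)) j) ((b(k := \<beta>)) j)) = (\<Prod>j\<in>J. G (a j) (b j))"
        by (rule prod.cong) (use kJ in auto)
      thus ?thesis using fJ kJ by simp
    qed
    show ?thesis
      unfolding F_def R_def Q_def PG HI
      by (simp add: ennreal_mult heat_nonneg' HJ_def prod_nonneg ac_simps)
  qed
  have QJ: "(\<integral>\<^sup>+\<alpha>. \<integral>\<^sup>+\<beta>. Q \<alpha> \<beta> c' d' \<partial>?L \<partial>?L) = JG G (u k) c' d'" for c' d'
    unfolding JG_def Q_def
    by (intro nn_integral_cong) (simp add: ennreal_mult heat_nonneg' heat_sym[of _ c'] heat_sym[of _ d'] ac_simps)
  have [measurable]: "(\<lambda>(\<alpha>, \<beta>). Q \<alpha> \<beta> c' d') \<in> borel_measurable (?L \<Otimes>\<^sub>M ?L)" for c' d'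
    unfolding Q_def by measurable
  have mR[measurable]: "(\<lambda>(a, b). R a b) \<in> borel_measurable (PJ \<Otimes>\<^sub>M PJ)"
    unfolding R_def HJ_def PJ_def by measurable
  have mR1[measurable]: "(\<lambda>b. R a b) \<in> borel_measurable PJ" for a
    unfolding R_def HJ_def PJ_def by measurable
  have Qm[measurable (raw)]: "(\<lambda>p. Q (f1 p) (f2 p) c' (f4 p)) \<in> borel_measurable N"
    if [measurable]: "f1 \<in> borel_measurable N" "f2 \<in> borel_measurable N" "f4 \<in> borel_measurable N"
    for N :: "(('a \<times> (nat \<Rightarrow> 'a)) \<times> 'a) measure" and f1 f2 f4 c'
    unfolding Q_def by measurable
  have me[measurable]: "e \<in> borel_measurable PJ"
    unfolding e_def PJ_def by measurable
  have mF[measurable]: "(\<lambda>(a, b). F a b) \<in> borel_measurable (PI \<Otimes>\<^sub>M PI)"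
    unfolding F_def HI_def PI_def by measurable
  have c0: "chainK G n u x k = (\<integral>\<^sup>+a. \<integral>\<^sup>+b. F a b \<partial>PI \<partial>PI)"
    unfolding chainK_def IJ PI_def F_def HI_def ..
  have c1: "chainK G n u x (Suc k) = (\<integral>\<^sup>+a. \<integral>\<^sup>+b. R a b \<partial>PJ \<partial>PJ)"
    unfolding chainK_def J_def[symmetric] PJ_def R_def HJ_def ..
  have "(\<integral>\<^sup>+a. \<integral>\<^sup>+b. F a b \<partial>PI \<partial>PI) = (\<integral>\<^sup>+a. \<integral>\<^sup>+\<alpha>. (\<integral>\<^sup>+b. F (a(k := \<alpha>)) b \<partial>PI) \<partial>?L \<partial>PJ)"
    unfolding PI_def PJ_def
    by (rule psf.product_nn_integral_insert[OF fJ kJ]) (fold PI_def, measurable)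
  also have "\<dots> = (\<integral>\<^sup>+a. \<integral>\<^sup>+\<alpha>. (\<integral>\<^sup>+b. \<integral>\<^sup>+\<beta>. Q \<alpha> \<beta> (e a) (e b) * R a b \<partial>?L \<partial>PJ) \<partial>?L \<partial>PJ)"
  proof (intro nn_integral_cong)
    fix a \<alpha>
    have [measurable]: "(\<lambda>b. F (a(k := \<alpha>)) b) \<in> borel_measurable PI"
      unfolding F_def HI_def PI_def by measurable
    show "(\<integral>\<^sup>+b. F (a(k := \<alpha>)) b \<partial>PI) = (\<integral>\<^sup>+b. \<integral>\<^sup>+\<beta>. Q \<alpha> \<beta> (e a) (e b) * R a b \<partial>?L \<partial>PJ)"
      unfolding PI_def PJ_def key[symmetric]
      by (rule psf.product_nn_integral_insert[OF fJ kJ]) (fold PI_def, measurable)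
  qed
  also have "\<dots> = (\<integral>\<^sup>+a. \<integral>\<^sup>+b. (\<integral>\<^sup>+\<alpha>. \<integral>\<^sup>+\<beta>. Q \<alpha> \<beta> (e a) (e b) * R a b \<partial>?L \<partial>?L) \<partial>PJ \<partial>PJ)"
    by (intro nn_integral_cong LPJ.Fubini'[symmetric]) measurable
  also have "\<dots> = (\<integral>\<^sup>+a. \<integral>\<^sup>+b. JG G (u k) (e a) (e b) * R a b \<partial>PJ \<partial>PJ)"
  proof (intro nn_integral_cong)
    fix a b
    have "(\<integral>\<^sup>+\<alpha>. \<integral>\<^sup>+\<beta>. Q \<alpha> \<beta> (e a) (e b) * R a b \<partial>?L \<partial>?L) = (\<integral>\<^sup>+\<alpha>. (\<integral>\<^sup>+\<beta>. Q \<alpha> \<beta> (e a) (e b) \<partial>?L) * R a b \<partial>?L)"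
      by (intro nn_integral_cong nn_integral_multc) measurable
    also have "\<dots> = (\<integral>\<^sup>+\<alpha>. \<integral>\<^sup>+\<beta>. Q \<alpha> \<beta> (e a) (e b) \<partial>?L \<partial>?L) * R a b"
      by (rule nn_integral_multc) measurable
    finally show "(\<integral>\<^sup>+\<alpha>. \<integral>\<^sup>+\<beta>. Q \<alpha> \<beta> (e a) (e b) * R a b \<partial>?L \<partial>?L) = JG G (u k) (e a) (e b) * R a b"
      by (simp add: QJ)
  qed
  also have "\<dots> \<le> (\<integral>\<^sup>+a. \<integral>\<^sup>+b. c * R a b \<partial>PJ \<partial>PJ)"
    by (intro nn_integral_mono mult_right_mono JB) simp
  also have "\<dots> = c * (\<integral>\<^sup>+a. \<integral>\<^sup>+b. R a b \<partial>PJ \<partial>PJ)"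
    by (subst nn_integral_cmult[symmetric]) (measurable, intro nn_integral_cong nn_integral_cmult, measurable)
  finally show ?thesis using c0 c1 by simp
qed

lemma chainK_bound:
  fixes G :: "'a::euclidean_space \<Rightarrow> 'a \<Rightarrow> ennreal"
  assumes Gm[measurable]: "(\<lambda>(w, w'). G w w') \<in> borel_measurable (lborel \<Otimes>\<^sub>M lborel)"
    and JB: "\<And>j a b. j < n \<Longrightarrow> JG G (u j) a b \<le> ennreal (B j)"
    and B0: "\<And>j. 0 \<le> B j"
  shows "k \<le> n \<Longrightarrow> chainK G n u x k \<le> ennreal (\<Prod>j\<in>{k..<n}. B j)"
proof (induction "n - k" arbitrary: k)
  case 0
  then have "k = n" by simp
  then show ?case by (simp add: chainK_base)
next
  case (Suc m)
  then have kn: "k < n" by simp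
  have "chainK G n u x k \<le> ennreal (B k) * chainK G n u x (Suc k)"
    by (rule chainK_step[where u=u and k=k, OF Gm _ kn]) (rule JB[OF kn])
  also have "\<dots> \<le> ennreal (B k) * ennreal (\<Prod>j\<in>{Suc k..<n}. B j)"
    using Suc kn by (intro mult_left_mono) auto
  also have "\<dots> = ennreal (\<Prod>j\<in>{k..<n}. B j)"
    using kn B0 by (simp add: prod.atLeast_Suc_lessThan ennreal_mult prod_nonneg)
  finally show ?case .
qed



lemma psiG_chain:
  fixes G :: "'a::euclidean_space \<Rightarrow> 'a \<Rightarrow> ennreal"
  assumes Gm[measurable]: "(\<lambda>(w, w'). G w w') \<in> borel_measurable (lborel \<Otimes>\<^sub>M lborel)"
    and bij: "bij_betw (sort_perm n s) {..<n} {..<n}"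
  shows "psiG G n T x s s = chainK G n (\<lambda>j. sorted_ext n T s (Suc j) - sorted_ext n T s j) x 0"
proof -
  define \<rho> where "\<rho> = sort_perm n s"
  define I where "I = {..<n}"
  define u where "u j = sorted_ext n T s (Suc j) - sorted_ext n T s j" for j
  define P where "P = PiM I (\<lambda>_. (lborel::'a measure))"
  interpret P: sigma_finite_measure P unfolding P_def I_def by (rule sf_PiM_lborel) simp
  define \<tau> where "\<tau> = the_inv_into I \<rho>"
  have \<rho>: "bij_betw \<rho> I I" using bij by (simp add: \<rho>_def I_def)
  have \<tau>: "bij_betw \<tau> I I" unfolding \<tau>_def by (rule bij_betw_the_inv_into[OF \<rho>])
  have \<tau>\<rho>: "\<tau> (\<rho> j) = j" if "j \<in> I" for j
    using \<rho> that unfolding \<tau>_def by (simp add: bij_betw_def the_inv_into_f_f)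
  have \<rho>I: "\<rho> j \<in> I" if "j \<in> I" for j using \<rho> that by (auto simp: bij_betw_def)
  define r where "r \<omega> = (\<lambda>i\<in>I. \<omega> (\<tau> i))" for \<omega> :: "nat \<Rightarrow> 'a"
  have reord: "reord_ext n s x (r \<omega>) = extp n x \<omega>" for \<omega>
  proof (rule ext)
    fix j
    show "reord_ext n s x (r \<omega>) j = extp n x \<omega> j"
      using \<rho>I[of j] \<tau>\<rho>[of j]
      by (simp add: reord_ext_def extp_def r_def \<rho>_def[symmetric] I_def)
  qed
  have Hch: "Hch n T s x (r \<omega>) = (\<Prod>j<n. heat (u j) (extp n x \<omega> (Suc j) - extp n x \<omega> j))" for \<omega>
    unfolding Hch_def reord u_def ..
  have PG: "(\<Prod>j<n. G (r \<omega> j) (r \<omega>' j)) = (\<Prod>j<n. G (\<omega> j) (\<omega>' j))" for \<omega> \<omega>'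
  proof -
    have "(\<Prod>j<n. G (r \<omega> j) (r \<omega>' j)) = (\<Prod>j\<in>I. G (\<omega> (\<tau> j)) (\<omega>' (\<tau> j)))"
      unfolding I_def r_def by (intro prod.cong) auto
    also have "\<dots> = (\<Prod>j\<in>I. G (\<omega> j) (\<omega>' j))"
      using prod.reindex_bij_betw[OF \<tau>, of "\<lambda>j. G (\<omega> j) (\<omega>' j)"] by simp
    finally show ?thesis by (simp add: I_def)
  qed
  define \<Phi> where "\<Phi> xs ys = (\<Prod>j<n. G (xs j) (ys j)) * ennreal (Hch n T s x xs) * ennreal (Hch n T s x ys)" for xs ys
  have [measurable]: "(\<lambda>(xs, ys). \<Phi> xs ys) \<in> borel_measurable (P \<Otimes>\<^sub>M P)"
    unfolding \<Phi>_def P_def I_def by measurable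
  have [measurable]: "(\<lambda>ys. \<Phi> xs ys) \<in> borel_measurable P" for xs
    unfolding \<Phi>_def P_def I_def by measurable
  have fI: "finite I" by (simp add: I_def)
  have mO: "(\<lambda>\<omega>. \<integral>\<^sup>+ys. \<Phi> \<omega> ys \<partial>P) \<in> borel_measurable P" by measurable
  have mI: "(\<lambda>ys. \<Phi> xs ys) \<in> borel_measurable P" for xs by measurable
  have "psiG G n T x s s = (\<integral>\<^sup>+xs. \<integral>\<^sup>+ys. \<Phi> xs ys \<partial>P \<partial>P)"
    unfolding psiG_def \<Phi>_def P_def I_def ..
  also have "\<dots> = (\<integral>\<^sup>+\<omega>. \<integral>\<^sup>+ys. \<Phi> (r \<omega>) ys \<partial>P \<partial>P)"
    unfolding P_def r_def
    by (rule nn_integral_PiM_perm[OF sigma_finite_lborel fI \<tau>]) (use mO in \<open>simp add: P_def\<close>)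
  also have "\<dots> = (\<integral>\<^sup>+\<omega>. \<integral>\<^sup>+\<omega>'. \<Phi> (r \<omega>) (r \<omega>') \<partial>P \<partial>P)"
    unfolding P_def r_def
    by (intro nn_integral_cong nn_integral_PiM_perm[OF sigma_finite_lborel fI \<tau>]) (use mI in \<open>simp add: P_def\<close>)
  also have "\<dots> = chainK G n u x 0"
    unfolding chainK_def \<Phi>_def Hch PG P_def I_def by (simp add: atLeast0LessThan)
  finally show ?thesis by (simp add: u_def[abs_def])
qed



definition SP :: "nat \<Rightarrow> (nat \<Rightarrow> real) \<Rightarrow> (nat \<Rightarrow> nat) \<Rightarrow> bool" where
  "SP n t \<rho> \<longleftrightarrow> bij_betw \<rho> {..<n} {..<n}
      \<and> (\<forall>i j. i < j \<and> j < n \<longrightarrow> t (\<rho> i) < t (\<rho> j))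
      \<and> (\<forall>i. n \<le> i \<longrightarrow> \<rho> i = i)"

lemma SP_list:
  assumes "SP n t \<rho>" and inj: "inj_on t {..<n}"
  shows "sorted_list_of_set (t ` {..<n}) = map (\<lambda>i. t (\<rho> i)) [0..<n]"
proof -
  have b: "bij_betw \<rho> {..<n} {..<n}" and m: "\<And>i j. i < j \<Longrightarrow> j < n \<Longrightarrow> t (\<rho> i) < t (\<rho> j)"
    using assms by (auto simp: SP_def)
  have "set (map (\<lambda>i. t (\<rho> i)) [0..<n]) = t ` \<rho> ` {..<n}"
    by (auto simp: image_image atLeast0LessThan[symmetric])
  also have "\<rho> ` {..<n} = {..<n}" using b by (simp add: bij_betw_def)
  finally have st: "set (map (\<lambda>i. t (\<rho> i)) [0..<n]) = t ` {..<n}" .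
  have "card (t ` {..<n}) = n" using inj by (simp add: card_image)
  moreover have "sorted_wrt (<) (map (\<lambda>i. t (\<rho> i)) [0..<n])"
    unfolding sorted_wrt_iff_nth_less using m by auto
  ultimately show ?thesis
    using sorted_list_of_set_unique[of "t ` {..<n}" "map (\<lambda>i. t (\<rho> i)) [0..<n]"] st by simp
qed

lemma SP_unique:
  assumes "SP n t \<rho>1" "SP n t \<rho>2" and inj: "inj_on t {..<n}"
  shows "\<rho>1 = \<rho>2"
proof (rule ext)
  fix i
  show "\<rho>1 i = \<rho>2 i"
  proof (cases "i < n")
    case True
    have "map (\<lambda>i. t (\<rho>1 i)) [0..<n] = map (\<lambda>i. t (\<rho>2 i)) [0..<n]"
      using SP_list[OF assms(1) inj] SP_list[OF assms(2) inj] by simp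
    then have "t (\<rho>1 i) = t (\<rho>2 i)" using True by auto
    have b1: "bij_betw \<rho>1 {..<n} {..<n}" "bij_betw \<rho>2 {..<n} {..<n}" using assms(1,2) by (simp_all add: SP_def)
    have "\<rho>1 i \<in> {..<n}" "\<rho>2 i \<in> {..<n}" using bij_betw_apply[OF b1(1)] bij_betw_apply[OF b1(2)] True by auto
    with \<open>t (\<rho>1 i) = t (\<rho>2 i)\<close> show ?thesis by (intro inj_onD[OF inj])
  next
  case False then show ?thesis using assms by (simp add: SP_def)
  qed
qed

lemma SP_exists:
  assumes inj: "inj_on t {..<n}"
  shows "\<exists>\<rho>. SP n t \<rho>"
proof -
  define L where "L = sorted_list_of_set (t ` {..<n})"
  have lenL: "length L = n" using inj by (simp add: L_def card_image)
  have setL: "set L = t ` {..<n}" by (simp add: L_def)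
  have sL: "sorted_wrt (<) L" by (simp add: L_def)
  define \<rho> where "\<rho> i = (if i < n then the_inv_into {..<n} t (L ! i) else i)" for i
  have in_img: "L ! i \<in> t ` {..<n}" if "i < n" for i using that lenL setL nth_mem by metis
  have \<rho>n: "\<rho> i < n" if "i < n" for i
    using that in_img[OF that] inj by (auto simp: \<rho>_def the_inv_into_f_f)
  have t\<rho>: "t (\<rho> i) = L ! i" if "i < n" for i
    using that in_img[OF that] inj by (auto simp: \<rho>_def f_the_inv_into_f)
  have mono: "t (\<rho> i) < t (\<rho> j)" if "i < j" "j < n" for i j
    using that sL lenL by (simp add: t\<rho> sorted_wrt_iff_nth_less)
  have injr: "inj_on \<rho> {..<n}"
  proof (rule inj_onI)
    fix i j assume "i \<in> {..<n}" "j \<in> {..<n}" "\<rho> i = \<rho> j"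
    then show "i = j" using mono[of i j] mono[of j i] by (cases i j rule: linorder_cases) auto
  qed
  have sub: "\<rho> ` {..<n} \<subseteq> {..<n}" using \<rho>n by auto
  have "\<rho> ` {..<n} = {..<n}"
    by (rule endo_inj_surj[OF _ sub injr]) simp
  then have bj: "bij_betw \<rho> {..<n} {..<n}" using injr by (simp add: bij_betw_def)
  have out: "\<forall>i. n \<le> i \<longrightarrow> \<rho> i = i" by (simp add: \<rho>_def)
  have "SP n t \<rho>" unfolding SP_def using bj mono out by blast
  then show ?thesis by blast
qed

lemma sort_perm_SP:
  assumes inj: "inj_on t {..<n}"
  shows "SP n t (sort_perm n t)"
proof -
  have eq: "sort_perm n t = (THE \<rho>. SP n t \<rho>)" unfolding sort_perm_def SP_def ..
  have ex1: "\<exists>!\<rho>. SP n t \<rho>"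
    by (rule ex_ex1I[OF SP_exists[OF inj]]) (rule SP_unique[OF _ _ inj])
  have "SP n t (THE \<rho>. SP n t \<rho>)" by (rule theI'[OF ex1])
  then show ?thesis by (simp only: eq)
qed



lemma JG_eq_Jf:
  fixes f :: "'a::euclidean_space \<Rightarrow> real" and G :: "'a \<Rightarrow> 'a \<Rightarrow> ennreal"
  assumes f0: "\<And>w. 0 \<le> f w" and eq: "\<And>x y. x \<noteq> y \<Longrightarrow> G x y = ennreal (f (x - y))"
  shows "JG G u a b = Jf f u u a b"
  unfolding JG_def Jf_def
proof (rule nn_integral_cong)
  fix w :: 'a
  have "AE w' in lborel. ennreal (heat u (w - a) * heat u (w' - b)) * G w w'
          = ennreal (heat u (w - a) * heat u (w' - b) * f (w - w'))"
    using AE_lborel_singleton[of w]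
    by eventually_elim (simp add: eq ennreal_mult'' f0 heat_nonneg')
  then show "(\<integral>\<^sup>+w'. ennreal (heat u (w - a) * heat u (w' - b)) * G w w' \<partial>lborel)
          = (\<integral>\<^sup>+w'. ennreal (heat u (w - a) * heat u (w' - b) * f (w - w')) \<partial>lborel)"
    by (rule nn_integral_cong_AE)
qed

definition Kmix :: "(real \<Rightarrow> real) \<Rightarrow> (real \<Rightarrow> real) \<Rightarrow> real \<times> 'a::euclidean_space \<Rightarrow> 'a \<Rightarrow> ennreal" where
  "Kmix W q \<theta> x = ennreal (sqrt (W (fst \<theta>)) * exp (- (2 * q (fst \<theta>)) * (norm (x - snd \<theta>))\<^sup>2))"

definition Gmix :: "(real \<Rightarrow> real) \<Rightarrow> (real \<Rightarrow> real) \<Rightarrow> 'a::euclidean_space \<Rightarrow> 'a \<Rightarrow> ennreal" where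
  "Gmix W q x y = (\<integral>\<^sup>+r. ennreal (W r * (pi / (4 * q r)) powr (real DIM('a) / 2) * exp (- q r * (norm (x - y))\<^sup>2)) \<partial>lborel)"

lemma mixture_gauss:
  fixes W q :: "real \<Rightarrow> real"
  assumes W0: "\<And>r. 0 \<le> W r" and q0: "\<And>r. W r \<noteq> 0 \<Longrightarrow> 0 < q r"
    and [measurable]: "W \<in> borel_measurable borel" "q \<in> borel_measurable borel"
  shows "mixture (lborel :: (real \<times> 'a::euclidean_space) measure) (Kmix W q) (Gmix W q :: 'a \<Rightarrow> 'a \<Rightarrow> ennreal)"
proof (rule mixture.intro)
  show "sigma_finite_measure (lborel :: (real \<times> 'a) measure)" by (rule sigma_finite_lborel)
  show "space (lborel :: (real \<times> 'a) measure) = UNIV" by simp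
  show "(\<lambda>(\<theta>, x). Kmix W q \<theta> x) \<in> borel_measurable (lborel \<Otimes>\<^sub>M (lborel :: 'a measure))"
    unfolding Kmix_def lborel_prod[symmetric] by measurable
  fix x y :: 'a
  have "(\<integral>\<^sup>+\<theta>. Kmix W q \<theta> x * Kmix W q \<theta> y \<partial>(lborel :: (real \<times> 'a) measure))
      = (\<integral>\<^sup>+r. \<integral>\<^sup>+z. Kmix W q (r, z) x * Kmix W q (r, z) y \<partial>lborel \<partial>lborel)"
  proof -
    have "(\<integral>\<^sup>+\<theta>. Kmix W q \<theta> x * Kmix W q \<theta> y \<partial>(lborel :: (real \<times> 'a) measure))
        = (\<integral>\<^sup>+\<theta>. Kmix W q \<theta> x * Kmix W q \<theta> y \<partial>(lborel \<Otimes>\<^sub>M (lborel :: 'a measure)))"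
      by (simp add: lborel_prod)
    also have "\<dots> = (\<integral>\<^sup>+r. \<integral>\<^sup>+z. Kmix W q (r, z) x * Kmix W q (r, z) y \<partial>lborel \<partial>lborel)"
      by (rule sigma_finite_measure.nn_integral_fst[OF sigma_finite_lborel, symmetric]) (unfold Kmix_def, measurable)
    finally show ?thesis .
  qed
  also have "\<dots> = (\<integral>\<^sup>+r. ennreal (W r * (pi / (4 * q r)) powr (real DIM('a) / 2) * exp (- q r * (norm (x - y))\<^sup>2)) \<partial>lborel)"
  proof (intro nn_integral_cong)
    fix r
    show "(\<integral>\<^sup>+z. Kmix W q (r, z) x * Kmix W q (r, z) y \<partial>lborel)
        = ennreal (W r * (pi / (4 * q r)) powr (real DIM('a) / 2) * exp (- q r * (norm (x - y))\<^sup>2))"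
    proof (cases "W r = 0")
      case True then show ?thesis by (simp add: Kmix_def)
    next
      case False
      then have q: "0 < q r" by (rule q0)
      have "(\<integral>\<^sup>+z. Kmix W q (r, z) x * Kmix W q (r, z) y \<partial>lborel)
          = (\<integral>\<^sup>+z. ennreal (W r) * ennreal (exp (- (2 * q r) * (norm (x - z))\<^sup>2) * exp (- (2 * q r) * (norm (y - z))\<^sup>2)) \<partial>lborel)"
        unfolding Kmix_def using W0[of r]
        by (intro nn_integral_cong) (simp add: ennreal_mult[symmetric] norm_minus_commute ac_simps)
      also have "\<dots> = ennreal (W r) * ennreal ((pi / (2 * (2 * q r))) powr (real DIM('a) / 2) * exp (- ((2 * q r) / 2) * (norm (x - y))\<^sup>2))"
        by (subst nn_integral_cmult, simp, subst gauss_conv, use q in simp_all)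
      also have "\<dots> = ennreal (W r * (pi / (4 * q r)) powr (real DIM('a) / 2) * exp (- q r * (norm (x - y))\<^sup>2))"
        using W0[of r] by (simp add: ennreal_mult[symmetric] ac_simps)
      finally show ?thesis .
    qed
  qed
  finally show "Gmix W q x y = (\<integral>\<^sup>+\<theta>. Kmix W q \<theta> x * Kmix W q \<theta> y \<partial>lborel)"
    unfolding Gmix_def by simp
qed

lemma Gmix_meas:
  assumes [measurable]: "W \<in> borel_measurable borel" "q \<in> borel_measurable borel"
  shows "(\<lambda>(x, y). Gmix W q x y) \<in> borel_measurable (lborel \<Otimes>\<^sub>M (lborel :: 'a::euclidean_space measure))"
  unfolding Gmix_def by measurable



lemma gamma_scaled:
  fixes s l :: real assumes s: "s > 0" and l: "l > 0"
  shows "(\<integral>\<^sup>+r. ennreal (indicator {0<..} r * r powr (s - 1) * exp (- (l * r))) \<partial>lborel) = ennreal (Gamma s * l powr (- s))"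
proof -
  define I where "I = (\<integral>\<^sup>+r. ennreal (indicator {0<..} r * r powr (s - 1) * exp (- (l * r))) \<partial>lborel)"
  have "ennreal (Gamma s) = (\<integral>\<^sup>+t. ennreal (indicator {0..} t * t powr (s - 1) / exp t) \<partial>lborel)"
    by (rule Gamma_conv_nn_integral_real[OF s])
  also have "\<dots> = ennreal \<bar>l\<bar> * (\<integral>\<^sup>+r. ennreal (indicator {0..} (0 + l * r) * (0 + l * r) powr (s - 1) / exp (0 + l * r)) \<partial>lborel)"
    by (rule nn_integral_real_affine) (use l in auto)
  also have "(\<integral>\<^sup>+r. ennreal (indicator {0..} (0 + l * r) * (0 + l * r) powr (s - 1) / exp (0 + l * r)) \<partial>lborel)
      = (\<integral>\<^sup>+r. ennreal (l powr (s - 1)) * ennreal (indicator {0<..} r * r powr (s - 1) * exp (- (l * r))) \<partial>lborel)"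
  proof (intro nn_integral_cong)
    fix r :: real
    show "ennreal (indicator {0..} (0 + l * r) * (0 + l * r) powr (s - 1) / exp (0 + l * r))
        = ennreal (l powr (s - 1)) * ennreal (indicator {0<..} r * r powr (s - 1) * exp (- (l * r)))"
    proof (cases "r > 0")
      case True
      then show ?thesis using l
        by (simp add: ennreal_mult[symmetric] powr_mult exp_minus field_simps indicator_def)
    next
      case False
      then have "r = 0 \<or> r < 0" by auto
      then show ?thesis using l
        by (auto simp: indicator_def zero_le_mult_iff)
    qed
  qed
  also have "\<dots> = ennreal (l powr (s - 1)) * I"
    unfolding I_def by (rule nn_integral_cmult) simp
  finally have eq: "ennreal (Gamma s) = ennreal (l * l powr (s - 1)) * I"
    using l by (simp add: ennreal_mult mult.assoc)
  have "l * l powr (s - 1) = l powr s" using l by (simp add: powr_diff field_simps powr_minus)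
  with eq have eq2: "ennreal (Gamma s) = ennreal (l powr s) * I" by simp
  have "ennreal (Gamma s * l powr (- s)) = ennreal (l powr (- s)) * ennreal (Gamma s)"
    using l Gamma_real_pos[OF s] by (simp add: ennreal_mult[symmetric] mult.commute)
  also have "\<dots> = (ennreal (l powr (- s)) * ennreal (l powr s)) * I"
    by (simp add: eq2 mult.assoc)
  also have "ennreal (l powr (- s)) * ennreal (l powr s) = 1"
    using l by (simp add: ennreal_mult[symmetric] powr_minus)
  finally show ?thesis by (simp add: I_def)
qed



definition WR :: "real \<Rightarrow> real \<Rightarrow> real \<Rightarrow> real" where
  "WR d \<alpha> r = 2 powr (- \<alpha>) * pi powr (- d / 2) / Gamma (\<alpha> / 2)
     * (indicator {0<..} r * r powr ((d - \<alpha>) / 2 - 1) * (4 * r / pi) powr (d / 2))"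

lemma WR_nonneg: "0 < \<alpha> \<Longrightarrow> 0 \<le> WR d \<alpha> r"
  unfolding WR_def using Gamma_real_pos[of "\<alpha>/2"] by (auto simp: indicator_def)

lemma WR_meas[measurable]: "WR d \<alpha> \<in> borel_measurable borel"
  unfolding WR_def by measurable

lemma WR_q: "WR d \<alpha> r \<noteq> 0 \<Longrightarrow> 0 < r"
  unfolding WR_def by (auto simp: indicator_def split: if_splits)

lemma riesz_nonneg: "0 < \<alpha> \<Longrightarrow> \<alpha> < real DIM('a) \<Longrightarrow> 0 \<le> riesz \<alpha> (w::'a::euclidean_space)"
  unfolding riesz_def Let_def using Gamma_real_pos[of "\<alpha>/2"] Gamma_real_pos[of "(real DIM('a) - \<alpha>)/2"]
  by simp

lemma riesz_Gmix:
  fixes x y :: "'a::euclidean_space"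
  assumes a: "0 < \<alpha>" "\<alpha> < real DIM('a)" and xy: "x \<noteq> y"
  shows "Gmix (WR (real DIM('a)) \<alpha>) (\<lambda>r. r) x y = ennreal (riesz \<alpha> (x - y))"
proof -
  define d where "d = real DIM('a)"
  define s where "s = (d - \<alpha>) / 2"
  define l where "l = (norm (x - y))\<^sup>2"
  define c0 where "c0 = 2 powr (- \<alpha>) * pi powr (- d / 2) / Gamma (\<alpha> / 2)"
  have s: "s > 0" using a by (simp add: s_def d_def)
  have l: "l > 0" using xy by (simp add: l_def)
  have c0: "c0 > 0" using Gamma_real_pos[of "\<alpha>/2"] a by (simp add: c0_def)
  have "Gmix (WR d \<alpha>) (\<lambda>r. r) x y = (\<integral>\<^sup>+r. ennreal c0 * ennreal (indicator {0<..} r * r powr (s - 1) * exp (- (l * r))) \<partial>lborel)"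
    unfolding Gmix_def d_def[symmetric]
  proof (intro nn_integral_cong)
    fix r :: real
    show "ennreal (WR d \<alpha> r * (pi / (4 * r)) powr (d / 2) * exp (- r * (norm (x - y))\<^sup>2))
        = ennreal c0 * ennreal (indicator {0<..} r * r powr (s - 1) * exp (- (l * r)))"
    proof (cases "r > 0")
      case True
      have p1: "(4 * r / pi) powr (d / 2) * (pi / (4 * r)) powr (d / 2) = 1"
        using True by (simp add: powr_mult[symmetric])
      have W1: "WR d \<alpha> r = c0 * (r powr (s - 1) * (4 * r / pi) powr (d / 2))"
        using True by (simp add: WR_def c0_def s_def)
      have "WR d \<alpha> r * (pi / (4 * r)) powr (d / 2) * exp (- r * (norm (x - y))\<^sup>2)
          = c0 * (r powr (s - 1) * exp (- (l * r))) * ((4 * r / pi) powr (d / 2) * (pi / (4 * r)) powr (d / 2))"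
        unfolding W1 l_def by (simp only: mult_ac mult_minus_left)
      also have "\<dots> = c0 * (indicator {0<..} r * r powr (s - 1) * exp (- (l * r)))"
        using True by (simp only: p1) simp
      finally show ?thesis using c0 by (simp add: ennreal_mult)
    next
      case False
      then show ?thesis by (simp add: WR_def)
    qed
  qed
  also have "\<dots> = ennreal c0 * ennreal (Gamma s * l powr (- s))"
    by (subst nn_integral_cmult) (simp_all add: gamma_scaled[OF s l])
  also have "\<dots> = ennreal (riesz \<alpha> (x - y))"
  proof -
    have nw: "norm (x - y) > 0" using xy by simp
    have lp: "l powr (- s) = norm (x - y) powr (- d + \<alpha>)"
    proof -
      have L: "l = norm (x - y) powr 2" unfolding l_def using nw by (simp add: powr_realpow)
      have "l powr (- s) = norm (x - y) powr (2 * (- s))" by (simp only: L powr_powr)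
      also have "2 * (- s) = - d + \<alpha>" by (simp add: s_def field_simps)
      finally show ?thesis .
    qed
    have rz: "riesz \<alpha> (x - y) = c0 * (Gamma s * norm (x - y) powr (- d + \<alpha>))"
      by (simp add: riesz_def Let_def d_def[symmetric] c0_def s_def)
    have g0: "0 \<le> Gamma s * l powr (- s)" using Gamma_real_pos[OF s] by simp
    show ?thesis using c0 g0 by (simp add: ennreal_mult[symmetric] rz lp)
  qed
  finally show ?thesis by (simp add: d_def)
qed

lemma riesz_le_Gmix:
  fixes x y :: "'a::euclidean_space"
  assumes a: "0 < \<alpha>" "\<alpha> < real DIM('a)"
  shows "ennreal (riesz \<alpha> (x - y)) \<le> Gmix (WR (real DIM('a)) \<alpha>) (\<lambda>r. r) x y"
proof (cases "x = y")
  case True then show ?thesis by (simp add: riesz_def Let_def)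
next
  case False then show ?thesis using riesz_Gmix[OF a False] by simp
qed



lemma exp_ge_term:
  fixes y :: real assumes "0 \<le> y"
  shows "y ^ k / fact k \<le> exp y"
proof -
  have s: "summable (\<lambda>n. y ^ n / fact n)" using summable_exp[of y] by (simp add: divide_inverse mult.commute)
  have "exp y = (\<Sum>n. y ^ n / fact n)" by (simp add: exp_def divide_inverse scaleR_conv_of_real mult.commute)
  moreover have "y ^ k / fact k \<le> (\<Sum>n. y ^ n / fact n)"
    using sum_le_suminf[OF s, of "{k}"] assms by simp
  ultimately show ?thesis by simp
qed

definition WB :: "real \<Rightarrow> real \<Rightarrow> real \<Rightarrow> real" where
  "WB d \<alpha> r = (4 * pi) powr (\<alpha> / 2) * Gamma (\<alpha> / 2)
     * (indicator {0<..} r * r powr ((\<alpha> - d) / 2 - 1) * exp (- r) * (1 / (pi * r)) powr (d / 2))"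

definition qB :: "real \<Rightarrow> real" where "qB r = 1 / (4 * r)"

definition hB :: "real \<Rightarrow> real \<Rightarrow> real \<Rightarrow> real \<Rightarrow> real" where
  "hB d \<alpha> c r = indicator {0<..} r * (r powr ((\<alpha> - d) / 2 - 1) * exp (- r) * exp (- c / (4 * r)))"

lemma WB_nonneg: "0 < \<alpha> \<Longrightarrow> 0 \<le> WB d \<alpha> r"
  unfolding WB_def using Gamma_real_pos[of "\<alpha>/2"] by (auto simp: indicator_def)

lemma WB_meas[measurable]: "WB d \<alpha> \<in> borel_measurable borel"
  unfolding WB_def by measurable

lemma qB_meas[measurable]: "qB \<in> borel_measurable borel"
  unfolding qB_def by measurable

lemma WB_q: "WB d \<alpha> r \<noteq> 0 \<Longrightarrow> 0 < qB r"
  unfolding WB_def qB_def by (auto simp: indicator_def split: if_splits)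

lemma hB_nonneg: "0 \<le> hB d \<alpha> c r"
  unfolding hB_def by (simp add: indicator_def)

lemma hB_meas[measurable]: "hB d \<alpha> c \<in> borel_measurable borel"
  unfolding hB_def by measurable

lemma Gmix_WB:
  fixes x y :: "'a::euclidean_space"
  assumes a: "0 < \<alpha>"
  shows "Gmix (WB (real DIM('a)) \<alpha>) qB x y
       = ennreal ((4 * pi) powr (\<alpha> / 2) * Gamma (\<alpha> / 2)) * (\<integral>\<^sup>+r. ennreal (hB (real DIM('a)) \<alpha> ((norm (x - y))\<^sup>2) r) \<partial>lborel)"
proof -
  define d where "d = real DIM('a)"
  define cB where "cB = (4 * pi) powr (\<alpha> / 2) * Gamma (\<alpha> / 2)"
  have "Gmix (WB d \<alpha>) qB x y = (\<integral>\<^sup>+r. ennreal cB * ennreal (hB d \<alpha> ((norm (x - y))\<^sup>2) r) \<partial>lborel)"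
    unfolding Gmix_def d_def[symmetric]
  proof (intro nn_integral_cong)
    fix r :: real
    show "ennreal (WB d \<alpha> r * (pi / (4 * qB r)) powr (d / 2) * exp (- qB r * (norm (x - y))\<^sup>2))
        = ennreal cB * ennreal (hB d \<alpha> ((norm (x - y))\<^sup>2) r)"
    proof (cases "r > 0")
      case True
      have e1: "pi / (4 * qB r) = pi * r" using True by (simp add: qB_def)
      have p1: "(1 / (pi * r)) powr (d / 2) * (pi * r) powr (d / 2) = 1"
        using True by (simp add: powr_mult[symmetric])
      have e2: "- qB r * (norm (x - y))\<^sup>2 = - (norm (x - y))\<^sup>2 / (4 * r)" by (simp add: qB_def)
      have "WB d \<alpha> r * (pi / (4 * qB r)) powr (d / 2) * exp (- qB r * (norm (x - y))\<^sup>2)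
          = cB * hB d \<alpha> ((norm (x - y))\<^sup>2) r * ((1 / (pi * r)) powr (d / 2) * (pi * r) powr (d / 2))"
        unfolding e1 e2 WB_def hB_def cB_def using True by (simp add: mult_ac)
      also have "\<dots> = cB * hB d \<alpha> ((norm (x - y))\<^sup>2) r" by (simp only: p1 mult_1_right)
      finally show ?thesis
        using Gamma_real_pos[of "\<alpha>/2"] hB_nonneg[of d \<alpha> "(norm (x - y))\<^sup>2" r] a
        by (simp add: ennreal_mult cB_def)
    next
      case False
      then show ?thesis by (simp add: WB_def hB_def)
    qed
  qed
  also have "\<dots> = ennreal cB * (\<integral>\<^sup>+r. ennreal (hB d \<alpha> ((norm (x - y))\<^sup>2) r) \<partial>lborel)"
    by (rule nn_integral_cmult) simp
  finally show ?thesis by (simp add: d_def cB_def)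
qed

lemma hB_finite:
  assumes c: "c > 0"
  shows "(\<integral>\<^sup>+r. ennreal (hB d \<alpha> c r) \<partial>lborel) < \<infinity>"
proof -
  define p where "p = (\<alpha> - d) / 2 - 1"
  define k where "k = nat \<lceil>- p\<rceil>"
  define s where "s = p + real k + 1"
  define M where "M = fact k * (4 / c) ^ k"
  have s: "s > 0" unfolding s_def k_def by linarith
  have M: "M > 0" using c by (simp add: M_def)
  have bound: "hB d \<alpha> c r \<le> M * (indicator {0<..} r * r powr (s - 1) * exp (- (1 * r)))" for r
  proof (cases "r > 0")
    case True
    have y: "0 \<le> c / (4 * r)" using c True by simp
    have "(c / (4 * r)) ^ k / fact k \<le> exp (c / (4 * r))" by (rule exp_ge_term[OF y])
    then have "exp (- c / (4 * r)) \<le> fact k / (c / (4 * r)) ^ k"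
      using c True by (simp add: exp_minus field_simps)
    also have "fact k / (c / (4 * r)) ^ k = M * r ^ k"
      using c True by (simp add: M_def power_divide field_simps)
    finally have e: "exp (- c / (4 * r)) \<le> M * r ^ k" .
    have rp: "r powr p * r ^ k = r powr (s - 1)"
      using True by (simp add: s_def powr_add powr_realpow)
    have "hB d \<alpha> c r = r powr p * exp (- r) * exp (- c / (4 * r))"
      using True by (simp add: hB_def p_def)
    also have "\<dots> \<le> r powr p * exp (- r) * (M * r ^ k)"
      by (intro mult_left_mono e) simp
    also have "\<dots> = M * (r powr p * r ^ k) * exp (- r)" by (simp add: ac_simps)
    finally have "hB d \<alpha> c r \<le> M * (r powr p * r ^ k) * exp (- r)" .
    then show ?thesis using True unfolding rp by (simp add: ac_simps)
  next
    case False then show ?thesis by (simp add: hB_def)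
  qed
  have "(\<integral>\<^sup>+r. ennreal (hB d \<alpha> c r) \<partial>lborel)
      \<le> (\<integral>\<^sup>+r. ennreal M * ennreal (indicator {0<..} r * r powr (s - 1) * exp (- (1 * r))) \<partial>lborel)"
  proof (intro nn_integral_mono)
    fix r
    show "ennreal (hB d \<alpha> c r) \<le> ennreal M * ennreal (indicator {0<..} r * r powr (s - 1) * exp (- (1 * r)))"
      using M bound[of r] by (simp add: ennreal_mult[symmetric])
  qed
  also have "\<dots> = ennreal M * ennreal (Gamma s * 1 powr (- s))"
    by (subst nn_integral_cmult, simp, subst gamma_scaled[OF s], simp_all)
  also have "\<dots> < \<infinity>" by (simp add: ennreal_mult_less_top)
  finally show ?thesis .
qed

lemma bessel_eq:
  fixes w :: "'a::euclidean_space"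
  shows "bessel \<alpha> w = (4 * pi) powr (\<alpha> / 2) * Gamma (\<alpha> / 2) * (\<integral>r. hB (real DIM('a)) \<alpha> ((norm w)\<^sup>2) r \<partial>lborel)"
  unfolding bessel_def Let_def set_lebesgue_integral_def hB_def by simp

lemma bessel_Gmix:
  fixes x y :: "'a::euclidean_space"
  assumes a: "0 < \<alpha>"
  shows "ennreal (bessel \<alpha> (x - y)) \<le> Gmix (WB (real DIM('a)) \<alpha>) qB x y"
    and "x \<noteq> y \<Longrightarrow> ennreal (bessel \<alpha> (x - y)) = Gmix (WB (real DIM('a)) \<alpha>) qB x y"
    and "0 \<le> bessel \<alpha> (x - y)"
proof -
  define h where "h = hB (real DIM('a)) \<alpha> ((norm (x - y))\<^sup>2)"
  define cB where "cB = (4 * pi) powr (\<alpha> / 2) * Gamma (\<alpha> / 2)"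
  have cB: "cB > 0" using a Gamma_real_pos[of "\<alpha>/2"] by (simp add: cB_def)
  have G: "Gmix (WB (real DIM('a)) \<alpha>) qB x y = ennreal cB * (\<integral>\<^sup>+r. ennreal (h r) \<partial>lborel)"
    unfolding h_def cB_def by (rule Gmix_WB[OF a])
  have b: "bessel \<alpha> (x - y) = cB * (\<integral>r. h r \<partial>lborel)"
    unfolding h_def cB_def by (rule bessel_eq)
  have i0: "0 \<le> (\<integral>r. h r \<partial>lborel)" by (simp add: h_def hB_nonneg)
  have le: "ennreal (\<integral>r. h r \<partial>lborel) \<le> (\<integral>\<^sup>+r. ennreal (h r) \<partial>lborel)"
  proof (cases "integrable lborel h")
    case True
    then show ?thesis by (subst nn_integral_eq_integral) (auto simp: h_def hB_nonneg)
  next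
    case False
    then show ?thesis by (simp add: not_integrable_integral_eq)
  qed
  show "0 \<le> bessel \<alpha> (x - y)" using cB i0 by (simp add: b)
  show "ennreal (bessel \<alpha> (x - y)) \<le> Gmix (WB (real DIM('a)) \<alpha>) qB x y"
    unfolding G b using cB i0 le by (simp add: ennreal_mult mult_left_mono)
  assume xy: "x \<noteq> y"
  have fin: "(\<integral>\<^sup>+r. ennreal (h r) \<partial>lborel) < \<infinity>"
    unfolding h_def by (rule hB_finite) (use xy in simp)
  have int: "integrable lborel h"
  proof (rule integrableI_nonneg)
    show "h \<in> borel_measurable lborel" by (simp add: h_def)
    show "AE x in lborel. 0 \<le> h x" by (simp add: h_def hB_nonneg)
    show "(\<integral>\<^sup>+ x. ennreal (h x) \<partial>lborel) < \<infinity>" by (rule fin)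
  qed
  have eq: "ennreal (\<integral>r. h r \<partial>lborel) = (\<integral>\<^sup>+r. ennreal (h r) \<partial>lborel)"
    using int by (subst nn_integral_eq_integral) (auto simp: h_def hB_nonneg)
  show "ennreal (bessel \<alpha> (x - y)) = Gmix (WB (real DIM('a)) \<alpha>) qB x y"
    unfolding G b using cB i0 by (simp add: ennreal_mult eq)
qed



lemma ennreal_sq_le: "(a::ennreal)\<^sup>2 \<le> b\<^sup>2 \<Longrightarrow> a \<le> b"
proof (rule ccontr)
  assume h: "a\<^sup>2 \<le> b\<^sup>2" and "\<not> a \<le> b"
  then have ba: "b < a" by simp
  have "b\<^sup>2 < a\<^sup>2"
  proof (cases b rule: ennreal_cases)
    case (real rb)
    note rb = real
    show ?thesis
    proof (cases a rule: ennreal_cases)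
      case (real ra)
      have "0 \<le> rb" using rb by simp
      moreover from rb real ba have "rb < ra"
        using ennreal_less_iff[of rb ra] by auto
      ultimately have "rb\<^sup>2 < ra\<^sup>2" by (simp add: power_strict_mono)
      then show ?thesis using \<open>b = ennreal rb\<close> real \<open>0 \<le> rb\<close>
        by (simp add: ennreal_power ennreal_less_iff)
    next
      case top
      then show ?thesis using rb by (simp add: ennreal_power top_unique)
    qed
  next
    case top
    then show ?thesis using ba by simp
  qed
  with h show False by simp
qed

lemma sorted_pos:
  assumes adm: "admissible n T s" and j: "j < n"
  shows "0 < sorted_ext n T s (Suc j) - sorted_ext n T s j"
proof -
  have inj: "inj_on s {..<n}" and rng: "\<And>i. i < n \<Longrightarrow> 0 < s i \<and> s i < T"
    using adm by (auto simp: admissible_def)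
  have sp: "SP n s (sort_perm n s)" by (rule sort_perm_SP[OF inj])
  then have b: "bij_betw (sort_perm n s) {..<n} {..<n}"
    and m: "\<And>i k. i < k \<Longrightarrow> k < n \<Longrightarrow> s (sort_perm n s i) < s (sort_perm n s k)"
    by (auto simp: SP_def)
  have \<rho>j: "sort_perm n s j < n" using bij_betw_apply[OF b] j by auto
  show ?thesis
  proof (cases "Suc j < n")
    case True then show ?thesis using m[of j "Suc j"] j by (simp add: sorted_ext_def)
  next
    case False then show ?thesis using j rng[OF \<rho>j] by (simp add: sorted_ext_def)
  qed
qed

lemma sort_bij:
  assumes adm: "admissible n T s"
  shows "bij_betw (sort_perm n s) {..<n} {..<n}"
proof -
  have inj: "inj_on s {..<n}" using adm by (auto simp: admissible_def)
  show ?thesis using sort_perm_SP[OF inj] by (simp add: SP_def)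
qed

lemma main_generic:
  fixes f :: "'a::euclidean_space \<Rightarrow> real" and G :: "'a \<Rightarrow> 'a \<Rightarrow> ennreal" and M :: "'b measure"
  assumes mix: "mixture M K G"
    and Gm: "(\<lambda>(w, w'). G w w') \<in> borel_measurable (lborel \<Otimes>\<^sub>M lborel)"
    and f0: "\<And>w. 0 \<le> f w" and fG: "\<And>w z. ennreal (f (w - z)) \<le> G w z"
    and JB: "\<And>v a b. 0 < v \<Longrightarrow> JG G v a b \<le> ennreal (B v)"
    and B0: "\<And>v. 0 \<le> B v"
    and adms: "admissible n T s" and admt: "admissible n T t"
  shows "(psi f n T x s t)\<^sup>2 \<le> ennreal (\<Prod>j<n. B (sorted_ext n T s (Suc j) - sorted_ext n T s j))
                                * ennreal (\<Prod>j<n. B (sorted_ext n T t (Suc j) - sorted_ext n T t j))"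
proof -
  have ch: "psiG G n T x r r \<le> ennreal (\<Prod>j<n. B (sorted_ext n T r (Suc j) - sorted_ext n T r j))"
    if adm: "admissible n T r" for r
  proof -
    have "psiG G n T x r r = chainK G n (\<lambda>j. sorted_ext n T r (Suc j) - sorted_ext n T r j) x 0"
      by (rule psiG_chain[OF Gm sort_bij[OF adm]])
    also have "\<dots> \<le> ennreal (\<Prod>j\<in>{0..<n}. B (sorted_ext n T r (Suc j) - sorted_ext n T r j))"
      by (rule chainK_bound[OF Gm _ B0]) (auto intro!: JB sorted_pos[OF adm])
    finally show ?thesis by (simp add: atLeast0LessThan)
  qed
  have "(psi f n T x s t)\<^sup>2 \<le> (psiG G n T x s t)\<^sup>2"
    by (intro power_mono psi_le_psiG f0 fG) simp
  also have "\<dots> \<le> psiG G n T x s s * psiG G n T x t t"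
    by (rule mixture.psiG_CS[OF mix])
  also have "\<dots> \<le> ennreal (\<Prod>j<n. B (sorted_ext n T s (Suc j) - sorted_ext n T s j))
                * ennreal (\<Prod>j<n. B (sorted_ext n T t (Suc j) - sorted_ext n T t j))"
    by (intro mult_mono ch adms admt) simp_all
  finally show ?thesis .
qed



lemma beta_pos: "admissible n T s \<Longrightarrow> 0 < beta n T s"
  unfolding beta_def by (intro prod_pos) (use sorted_pos in force)

lemma prod_B:
  assumes adm: "admissible n T s" and D: "0 < D"
  shows "(\<Prod>j<n. D * ((sorted_ext n T s (Suc j) - sorted_ext n T s j) + (sorted_ext n T s (Suc j) - sorted_ext n T s j)) powr e)
       = (D * 2 powr e) ^ n * beta n T s powr e"
proof -
  define u where "u j = sorted_ext n T s (Suc j) - sorted_ext n T s j" for j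
  have u: "0 < u j" if "j < n" for j using sorted_pos[OF adm that] by (simp add: u_def)
  have "(\<Prod>j<n. D * (u j + u j) powr e) = (\<Prod>j<n. (D * 2 powr e) * u j powr e)"
  proof (rule prod.cong)
    fix j assume "j \<in> {..<n}"
    then have "0 < u j" using u by simp
    then have "(2 * u j) powr e = 2 powr e * u j powr e" by (auto intro: powr_mult)
    moreover have "u j + u j = 2 * u j" by simp
    ultimately have "(u j + u j) powr e = 2 powr e * u j powr e" by (simp only:)
    then show "D * (u j + u j) powr e = (D * 2 powr e) * u j powr e"
      by (simp only: mult.assoc)
  qed simp
  also have "\<dots> = (D * 2 powr e) ^ n * (\<Prod>j<n. u j powr e)"
    by (simp only: prod.distrib prod_constant card_lessThan power_mult_distrib)
  also have "(\<Prod>j<n. u j powr e) = (\<Prod>j<n. u j) powr e"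
    by (rule prod_powr_distrib[symmetric])
  finally show ?thesis unfolding u_def beta_def .
qed

lemma sqh: "(q::real)\<^sup>2 = b1 * b2 \<Longrightarrow> (a * q)\<^sup>2 = (a * b1) * (a * b2)"
proof -
  assume h: "q\<^sup>2 = b1 * b2"
  have "(a * q)\<^sup>2 = a * a * q\<^sup>2" by (simp add: power2_eq_square)
  also have "\<dots> = (a * b1) * (a * b2)" by (simp add: h)
  finally show ?thesis .
qed

lemma part1_generic:
  fixes f :: "'a::euclidean_space \<Rightarrow> real" and G :: "'a \<Rightarrow> 'a \<Rightarrow> ennreal" and M :: "'b measure"
  assumes mix: "mixture M K G"
    and Gm: "(\<lambda>(w, w'). G w w') \<in> borel_measurable (lborel \<Otimes>\<^sub>M lborel)"
    and f0: "\<And>w. 0 \<le> f w" and fG: "\<And>w z. ennreal (f (w - z)) \<le> G w z"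
    and Geq: "\<And>w z. w \<noteq> z \<Longrightarrow> G w z = ennreal (f (w - z))"
    and D: "0 < D"
    and J: "\<forall>u v (y :: 'a) z. 0 < u \<longrightarrow> 0 < v \<longrightarrow>
         Jf f u v y z \<le> ennreal (D * (u + v) powr (- (real DIM('a) - \<alpha>) / 2))"
    and adms: "admissible n T s" and admt: "admissible n T t"
  shows "psi f n T x s t \<le>
              ennreal ((D * 2 powr (- (real DIM('a) - \<alpha>) / 2)) ^ n
                * (beta n T s * beta n T t) powr (- (real DIM('a) - \<alpha>) / 4))"
proof -
  define e where "e = - (real DIM('a) - \<alpha>) / 2"
  define E where "E = D * 2 powr e"
  define B where "B v = D * (v + v) powr e" for v
  have e4: "- (real DIM('a) - \<alpha>) / 4 = e / 2" by (simp add: e_def)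
  have JB: "JG G v a b \<le> ennreal (B v)" if "0 < v" for v a b
  proof -
    have "JG G v a b = Jf f v v a b" by (rule JG_eq_Jf[where f=f and G=G, OF f0 Geq])
    also have "\<dots> \<le> ennreal (B v)" using J that unfolding B_def e_def by blast
    finally show ?thesis .
  qed
  have B0: "0 \<le> B v" for v using D by (simp add: B_def)
  have bs: "0 < beta n T s" and bt: "0 < beta n T t" using beta_pos adms admt by auto
  have E0: "0 \<le> E" using D by (simp add: E_def)
  have "(psi f n T x s t)\<^sup>2 \<le> ennreal (E ^ n * beta n T s powr e) * ennreal (E ^ n * beta n T t powr e)"
    using main_generic[OF mix Gm f0 fG JB B0 adms admt, of x]
    unfolding B_def prod_B[OF adms D] prod_B[OF admt D] E_def .
  also have "\<dots> = (ennreal (E ^ n * (beta n T s * beta n T t) powr (e / 2)))\<^sup>2"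
  proof -
    have "(E ^ n * (beta n T s * beta n T t) powr (e / 2))\<^sup>2
        = (E ^ n * beta n T s powr e) * (E ^ n * beta n T t powr e)"
    proof -
      have "((beta n T s * beta n T t) powr (e / 2))\<^sup>2 = (beta n T s * beta n T t) powr e"
        by (simp add: power2_eq_square powr_add[symmetric])
      also have "\<dots> = beta n T s powr e * beta n T t powr e"
        using bs bt by (simp add: powr_mult)
      finally show ?thesis by (rule sqh)
    qed
    note sq = this
    have X0: "0 \<le> E ^ n * (beta n T s * beta n T t) powr (e / 2)" using E0 by simp
    have A0: "0 \<le> E ^ n * beta n T s powr e" "0 \<le> E ^ n * beta n T t powr e" using E0 by simp_all
    have "(ennreal (E ^ n * (beta n T s * beta n T t) powr (e / 2)))\<^sup>2
        = ennreal ((E ^ n * (beta n T s * beta n T t) powr (e / 2))\<^sup>2)"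
      by (rule ennreal_power[OF X0])
    also have "\<dots> = ennreal (E ^ n * beta n T s powr e) * ennreal (E ^ n * beta n T t powr e)"
      unfolding sq by (rule ennreal_mult[OF A0])
    finally show ?thesis by (rule sym)
  qed
  finally have "psi f n T x s t \<le> ennreal (E ^ n * (beta n T s * beta n T t) powr (e / 2))"
    by (rule ennreal_sq_le)
  then show ?thesis unfolding e_def[symmetric] e4 E_def[symmetric] .
qed



lemma mixture_const:
  assumes c: "0 \<le> c"
  shows "mixture (count_space (UNIV::unit set)) (\<lambda>_ _. ennreal (sqrt c)) (\<lambda>(_::'a::euclidean_space) _. ennreal c)"
proof (rule mixture.intro)
  show "sigma_finite_measure (count_space (UNIV::unit set))"
    by (rule sigma_finite_measure_count_space_countable) simp
  show "space (count_space (UNIV::unit set)) = UNIV" by simp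
  show "(\<lambda>(\<theta>, x::'a). ennreal (sqrt c)) \<in> borel_measurable (count_space UNIV \<Otimes>\<^sub>M lborel)" by simp
  fix x y :: 'a
  have "(\<integral>\<^sup>+\<theta>. ennreal (sqrt c) * ennreal (sqrt c) \<partial>count_space (UNIV::unit set)) = ennreal (sqrt c) * ennreal (sqrt c)"
    by (simp add: nn_integral_count_space_finite)
  also have "\<dots> = ennreal c" using c by (simp add: ennreal_mult[symmetric])
  finally show "ennreal c = (\<integral>\<^sup>+\<theta>. ennreal (sqrt c) * ennreal (sqrt c) \<partial>count_space (UNIV::unit set))" by simp
qed

lemma JG_const:
  fixes a b :: "'a::euclidean_space"
  assumes v: "0 < v"
  shows "JG (\<lambda>_ _. ennreal c) v a b = ennreal c"
proof -
  have "JG (\<lambda>_ _. ennreal c) v a b = (\<integral>\<^sup>+w. ennreal (heat v (w - a)) * (\<integral>\<^sup>+w'. ennreal (heat v (w' - b)) * ennreal c \<partial>lborel) \<partial>lborel)"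
    unfolding JG_def
    by (intro nn_integral_cong) (subst nn_integral_cmult[symmetric], simp, simp add: ennreal_mult heat_nonneg' mult.assoc)
  also have "\<dots> = (\<integral>\<^sup>+w. ennreal (heat v (w - a)) * ennreal c \<partial>lborel)"
    by (intro nn_integral_cong) (simp add: nn_integral_multc heat_int[OF v])
  also have "\<dots> = ennreal c"
    by (simp add: nn_integral_multc heat_int[OF v])
  finally show ?thesis .
qed

lemma part2_generic:
  fixes f :: "'a::euclidean_space \<Rightarrow> real"
  assumes f0: "\<And>w. 0 \<le> f w" and fc: "\<And>w. f w \<le> c"
    and adms: "admissible n T s" and admt: "admissible n T t"
  shows "psi f n T x s t \<le> ennreal (c ^ n)"
proof -
  have c: "0 \<le> c" using f0[of 0] fc[of 0] by simp
  have "(psi f n T x s t)\<^sup>2 \<le> ennreal (\<Prod>j<n. c) * ennreal (\<Prod>j<n. c)"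
    by (rule main_generic[OF mixture_const[OF c], where B="\<lambda>_. c"])
       (simp_all add: f0 fc JG_const c adms admt)
  also have "\<dots> = (ennreal (c ^ n))\<^sup>2"
    using c by (simp add: power2_eq_square)
  finally show ?thesis by (rule ennreal_sq_le)
qed



lemma heatk_bound: "0 < \<alpha> \<Longrightarrow> heatk \<alpha> (w::'a::euclidean_space) \<le> (2 * pi * \<alpha>) powr (- (real DIM('a) / 2))"
  unfolding heatk_def by (intro mult_left_le) simp_all

lemma heatk_nonneg: "0 \<le> heatk \<alpha> w"
  unfolding heatk_def by simp

lemma poisson_bound:
  assumes a: "0 < \<alpha>"
  shows "poisson \<alpha> (w::'a::euclidean_space) \<le> pi powr (- (real DIM('a) + 1) / 2) * Gamma ((real DIM('a) + 1) / 2) * \<alpha> * (\<alpha>\<^sup>2) powr (- (real DIM('a) + 1) / 2)"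
proof -
  have g: "0 < Gamma ((real DIM('a) + 1) / 2)" by (rule Gamma_real_pos) simp
  have "((norm w)\<^sup>2 + \<alpha>\<^sup>2) powr (- (real DIM('a) + 1) / 2) \<le> (\<alpha>\<^sup>2) powr (- (real DIM('a) + 1) / 2)"
    by (rule powr_mono2') (use a in auto)
  then show ?thesis unfolding poisson_def Let_def using a g
    by (intro mult_left_mono) simp_all
qed

lemma poisson_nonneg: "0 < \<alpha> \<Longrightarrow> 0 \<le> poisson \<alpha> (w::'a::euclidean_space)"
  unfolding poisson_def Let_def using Gamma_real_pos[of "(real DIM('a) + 1) / 2"] by simp

theorem lemma3p4:
  fixes \<alpha> :: real
  shows
  "(\<forall>(f :: 'a::euclidean_space \<Rightarrow> real) D.
      (f = riesz \<alpha> \<or> f = bessel \<alpha>) \<and> 0 < \<alpha> \<and> \<alpha> < real DIM('a) \<and> 0 < D \<and>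
      (\<forall>u v (y :: 'a) z. 0 < u \<longrightarrow> 0 < v \<longrightarrow>
         Jf f u v y z \<le> ennreal (D * (u + v) powr (- (real DIM('a) - \<alpha>) / 2)))
      \<longrightarrow> (\<forall>n T (x :: 'a) s t. 1 \<le> n \<longrightarrow> 0 < T \<longrightarrow> admissible n T s \<longrightarrow> admissible n T t \<longrightarrow>
            psi f n T x s t \<le>
              ennreal ((D * 2 powr (- (real DIM('a) - \<alpha>) / 2)) ^ n
                * (beta n T s * beta n T t) powr (- (real DIM('a) - \<alpha>) / 4))))
   \<and>
   (\<forall>f :: 'a \<Rightarrow> real. (f = heatk \<alpha> \<or> f = poisson \<alpha>) \<and> 0 < \<alpha> \<longrightarrow>
      (\<exists>C :: real. \<forall>n T (x :: 'a) s t. 1 \<le> n \<longrightarrow> 0 < T \<longrightarrow> admissible n T s \<longrightarrow> admissible n T t \<longrightarrow>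
            psi f n T x s t \<le> ennreal (C ^ n)))"
proof (intro conjI allI impI)
  fix f :: "'a \<Rightarrow> real" and D :: real and n :: nat and T :: real and x :: 'a and s t
  assume h: "(f = riesz \<alpha> \<or> f = bessel \<alpha>) \<and> 0 < \<alpha> \<and> \<alpha> < real DIM('a) \<and> 0 < D \<and>
      (\<forall>u v (y :: 'a) z. 0 < u \<longrightarrow> 0 < v \<longrightarrow>
         Jf f u v y z \<le> ennreal (D * (u + v) powr (- (real DIM('a) - \<alpha>) / 2)))"
    and adms: "admissible n T s" and admt: "admissible n T t"
  then have a: "0 < \<alpha>" "\<alpha> < real DIM('a)" and D: "0 < D"
    and J: "\<forall>u v (y :: 'a) z. 0 < u \<longrightarrow> 0 < v \<longrightarrow>
         Jf f u v y z \<le> ennreal (D * (u + v) powr (- (real DIM('a) - \<alpha>) / 2))" by auto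
  from h have "f = riesz \<alpha> \<or> f = bessel \<alpha>" by simp
  then show "psi f n T x s t \<le>
              ennreal ((D * 2 powr (- (real DIM('a) - \<alpha>) / 2)) ^ n
                * (beta n T s * beta n T t) powr (- (real DIM('a) - \<alpha>) / 4))"
  proof
    assume f: "f = riesz \<alpha>"
    show ?thesis
    proof (rule part1_generic[OF mixture_gauss[of "WR (real DIM('a)) \<alpha>" "\<lambda>r. r"] Gmix_meas _ _ _ D _ adms admt])
      show "\<And>r. 0 \<le> WR (real DIM('a)) \<alpha> r" by (rule WR_nonneg[OF a(1)])
      show "\<And>r. WR (real DIM('a)) \<alpha> r \<noteq> 0 \<Longrightarrow> 0 < r" by (rule WR_q)
      show "\<And>w. 0 \<le> f w" unfolding f by (rule riesz_nonneg[OF a])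
      show "\<And>w z. ennreal (f (w - z)) \<le> Gmix (WR (real DIM('a)) \<alpha>) (\<lambda>r. r) w z"
        unfolding f by (rule riesz_le_Gmix[OF a])
      show "\<And>w z. w \<noteq> z \<Longrightarrow> Gmix (WR (real DIM('a)) \<alpha>) (\<lambda>r. r) w z = ennreal (f (w - z))"
        unfolding f by (rule riesz_Gmix[OF a])
      show "\<forall>u v (y :: 'a) z. 0 < u \<longrightarrow> 0 < v \<longrightarrow>
         Jf f u v y z \<le> ennreal (D * (u + v) powr (- (real DIM('a) - \<alpha>) / 2))" by (rule J)
    qed simp_all
  next
    assume f: "f = bessel \<alpha>"
    show ?thesis
    proof (rule part1_generic[OF mixture_gauss[of "WB (real DIM('a)) \<alpha>" qB] Gmix_meas _ _ _ D _ adms admt])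
      show "\<And>r. 0 \<le> WB (real DIM('a)) \<alpha> r" by (rule WB_nonneg[OF a(1)])
      show "\<And>r. WB (real DIM('a)) \<alpha> r \<noteq> 0 \<Longrightarrow> 0 < qB r" by (rule WB_q)
      show "\<And>w. 0 \<le> f w" unfolding f using bessel_Gmix(3)[OF a(1), of _ 0] by simp
      show "\<And>w z. ennreal (f (w - z)) \<le> Gmix (WB (real DIM('a)) \<alpha>) qB w z"
        unfolding f by (rule bessel_Gmix(1)[OF a(1)])
      show "\<And>w z. w \<noteq> z \<Longrightarrow> Gmix (WB (real DIM('a)) \<alpha>) qB w z = ennreal (f (w - z))"
        unfolding f by (rule bessel_Gmix(2)[OF a(1), symmetric])
      show "\<forall>u v (y :: 'a) z. 0 < u \<longrightarrow> 0 < v \<longrightarrow>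
         Jf f u v y z \<le> ennreal (D * (u + v) powr (- (real DIM('a) - \<alpha>) / 2))" by (rule J)
    qed simp_all
  qed
next
  fix f :: "'a \<Rightarrow> real"
  assume h: "(f = heatk \<alpha> \<or> f = poisson \<alpha>) \<and> 0 < \<alpha>"
  then have a: "0 < \<alpha>" by simp
  from h have "f = heatk \<alpha> \<or> f = poisson \<alpha>" by simp
  then obtain c where f0: "\<And>w. 0 \<le> f w" and fc: "\<And>w. f w \<le> c"
  proof
    assume f: "f = heatk \<alpha>"
    show ?thesis
      by (rule that[of "(2 * pi * \<alpha>) powr (- (real DIM('a) / 2))"])
         (simp_all add: f heatk_nonneg heatk_bound[OF a])
  next
    assume f: "f = poisson \<alpha>"
    show ?thesis
      by (rule that[of "pi powr (- (real DIM('a) + 1) / 2) * Gamma ((real DIM('a) + 1) / 2) * \<alpha> * (\<alpha>\<^sup>2) powr (- (real DIM('a) + 1) / 2)"])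
         (unfold f, rule poisson_nonneg[OF a], rule poisson_bound[OF a])
  qed
  show "\<exists>C :: real. \<forall>n T (x :: 'a) s t. 1 \<le> n \<longrightarrow> 0 < T \<longrightarrow> admissible n T s \<longrightarrow> admissible n T t \<longrightarrow>
            psi f n T x s t \<le> ennreal (C ^ n)"
    using part2_generic[where f=f and c=c, OF f0 fc] by blast
qed


end
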